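(* Let $n\ge1$ and let $(\eta,\xi)$ be an $n$-Lie-isoclinism from $\mathfrak g_1$ to $\mathfrak g_2$, and define $\mathcal K$, $Z_{\mathfrak g_1}$, $Z_{\mathfrak g_2}$ as in the context. Assume $[\mathcal Z_{n-1}^{\mathsf{Lie}}(\mathfrak g_i),\mathfrak g_i]_{\mathsf{Lie}}\subseteq\gamma_{n+1}^{\mathsf{Lie}}(\mathfrak g_i)$ for $i=1,2$. Then for $\{i,j\}=\{1,2\}$, $$\mathcal K/Z_{\mathfrak g_j}\ \sim_n\ \mathcal K/Z_{\mathfrak g_i}\oplus\mathcal K/\gamma_{n+1}^{\mathsf{Lie}}(\mathcal K).$$
   Context: All Leibniz algebras are over a field $\mathbb{K}$ with $\frac12\in\mathbb{K}$. A Leibniz algebra is a vector space $\mathfrak g$ with a bilinear bracket $[-,-]$ satisfying $[x,[y,z]]=[[x,y],z]-[[x,z],y]$. For $x,y\in\mathfrak g$ put $[x,y]_{lie}=[x,y]+[y,x]$. For two-sided ideals $\mathfrak m,\mathfrak n$ of $\mathfrak g$, $[\mathfrak m,\mathfrak n]_{\mathsf{Lie}}$ denotes the two-sided ideal of $\mathfrak g$ generated by $\{[m,x]_{lie}: m\in\mathfrak m, x\in\mathfrak n\}$. Lower Lie-central series: $\gamma_1^{\mathsf{Lie}}(\mathfrak g)=\mathfrak g$, $\gamma_i^{\mathsf{Lie}}(\mathfrak g)=[\gamma_{i-1}^{\mathsf{Lie}}(\mathfrak g),\mathfrak g]_{\mathsf{Lie}}$ for $i\ge2$. Upper Lie-central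 series: $\mathcal Z_0^{\mathsf{Lie}}(\mathfrak g)=0$, $\mathcal Z_i^{\mathsf{Lie}}(\mathfrak g)=\{x\in\mathfrak g:[x,y]_{lie}\in\mathcal Z_{i-1}^{\mathsf{Lie}}(\mathfrak g)\ \text{for all } y\in\mathfrak g\}$ for $i\ge1$. For $n\ge0$, Leibniz algebras $\mathfrak g_1,\mathfrak g_2$ are $n$-Lie-isoclinic, written $\mathfrak g_1\sim_n\mathfrak g_2$, if there exist Leibniz algebra isomorphisms $\eta:\mathfrak g_1/\mathcal Z_n^{\mathsf{Lie}}(\mathfrak g_1)\to\mathfrak g_2/\mathcal Z_n^{\mathsf{Lie}}(\mathfrak g_2)$ and $\xi:\gamma_{n+1}^{\mathsf{Lie}}(\mathfrak g_1)\to\gamma_{n+1}^{\mathsf{Lie}}(\mathfrak g_2)$ such that $\xi([\cdots[[x_1,x_2]_{lie},x_3]_{lie},\ldots,x_{n+1}]_{lie})=[\cdots[[y_1,y_2]_{lie},y_3]_{lie},\ldots,y_{n+1}]_{lie}$ whenever $x_i\in\mathfrak g_1$, $y_i\in\mathfrak g_2$ satisfy $\eta(x_i+\mathcal Z_n^{\mathsf{Lie}}(\mathfrak g_1))=y_i+\mathcal Z_n^{\mathsf{Lie}}(\mathfrak g_2)$ for $i=1,\ldots,n+1$; $(\eta,\xi)$ is then called an $n$-Lie-isoclinism from $\mathfrak g_1$ to $\mathfrak g_2$. Given such $(\eta,\xi)$: $\mathcal K=\{(g,h)\in\mathfrak g_1\oplus\mathfrak g_2:\eta(g+\mathcal Z_n^{\mathsf{Lie}}(\mathfrak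 g_1))=h+\mathcal Z_n^{\mathsf{Lie}}(\mathfrak g_2)\}$ (a subalgebra of $\mathfrak g_1\oplus\mathfrak g_2$), $Z_{\mathfrak g_1}=\{(g,0):g\in\mathcal Z_n^{\mathsf{Lie}}(\mathfrak g_1)\}$ and $Z_{\mathfrak g_2}=\{(0,h):h\in\mathcal Z_n^{\mathsf{Lie}}(\mathfrak g_2)\}$ (two-sided ideals of $\mathcal K$). *)

theory Defs
  imports Main
begin

record ('k, 'a) leib =
  lcarrier :: "'a set"
  ladd :: "'a \<Rightarrow> 'a \<Rightarrow> 'a"
  lzero :: "'a"
  lsmult :: "'k \<Rightarrow> 'a \<Rightarrow> 'a"
  lbr :: "'a \<Rightarrow> 'a \<Rightarrow> 'a"

definition lsub :: "('k::field, 'a) leib \<Rightarrow> 'a \<Rightarrow> 'a \<Rightarrow> 'a" where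
  "lsub L x y = ladd L x (lsmult L (-1) y)"

definition vecspace :: "('k::field, 'a) leib \<Rightarrow> bool" where
  "vecspace L \<longleftrightarrow>
     lzero L \<in> lcarrier L \<and>
     (\<forall>x\<in>lcarrier L. \<forall>y\<in>lcarrier L. ladd L x y \<in> lcarrier L) \<and>
     (\<forall>c. \<forall>x\<in>lcarrier L. lsmult L c x \<in> lcarrier L) \<and>
     (\<forall>x\<in>lcarrier L. \<forall>y\<in>lcarrier L. \<forall>z\<in>lcarrier L.
        ladd L (ladd L x y) z = ladd L x (ladd L y z)) \<and>
     (\<forall>x\<in>lcarrier L. \<forall>y\<in>lcarrier L. ladd L x y = ladd L y x) \<and>
     (\<forall>x\<in>lcarrier L. ladd L (lzero L) x = x) \<and>
     (\<forall>x\<in>lcarrier L. \<exists>y\<in>lcarrier L. ladd L x y = lzero L) \<and>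
     (\<forall>c. \<forall>x\<in>lcarrier L. \<forall>y\<in>lcarrier L.
        lsmult L c (ladd L x y) = ladd L (lsmult L c x) (lsmult L c y)) \<and>
     (\<forall>c d. \<forall>x\<in>lcarrier L. lsmult L (c + d) x = ladd L (lsmult L c x) (lsmult L d x)) \<and>
     (\<forall>c d. \<forall>x\<in>lcarrier L. lsmult L (c * d) x = lsmult L c (lsmult L d x)) \<and>
     (\<forall>x\<in>lcarrier L. lsmult L 1 x = x)"

definition leibniz :: "('k::field, 'a) leib \<Rightarrow> bool" where
  "leibniz L \<longleftrightarrow> vecspace L \<and>
     (\<forall>x\<in>lcarrier L. \<forall>y\<in>lcarrier L. lbr L x y \<in> lcarrier L) \<and>
     (\<forall>x\<in>lcarrier L. \<forall>y\<in>lcarrier L. \<forall>z\<in>lcarrier L.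
        lbr L (ladd L x y) z = ladd L (lbr L x z) (lbr L y z) \<and>
        lbr L x (ladd L y z) = ladd L (lbr L x y) (lbr L x z)) \<and>
     (\<forall>c. \<forall>x\<in>lcarrier L. \<forall>y\<in>lcarrier L.
        lbr L (lsmult L c x) y = lsmult L c (lbr L x y) \<and>
        lbr L x (lsmult L c y) = lsmult L c (lbr L x y)) \<and>
     (\<forall>x\<in>lcarrier L. \<forall>y\<in>lcarrier L. \<forall>z\<in>lcarrier L.
        lbr L x (lbr L y z) = lsub L (lbr L (lbr L x y) z) (lbr L (lbr L x z) y))"

definition lie :: "('k::field, 'a) leib \<Rightarrow> 'a \<Rightarrow> 'a \<Rightarrow> 'a" where
  "lie L x y = ladd L (lbr L x y) (lbr L y x)"

definition ideal :: "('k::field, 'a) leib \<Rightarrow> 'a set \<Rightarrow> bool" where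
  "ideal L I \<longleftrightarrow> I \<subseteq> lcarrier L \<and> lzero L \<in> I \<and>
     (\<forall>x\<in>I. \<forall>y\<in>I. ladd L x y \<in> I) \<and> (\<forall>c. \<forall>x\<in>I. lsmult L c x \<in> I) \<and>
     (\<forall>x\<in>I. \<forall>y\<in>lcarrier L. lbr L x y \<in> I \<and> lbr L y x \<in> I)"

definition gen_ideal :: "('k::field, 'a) leib \<Rightarrow> 'a set \<Rightarrow> 'a set" where
  "gen_ideal L S = \<Inter> {I. ideal L I \<and> S \<subseteq> I}"

definition lie_comm :: "('k::field, 'a) leib \<Rightarrow> 'a set \<Rightarrow> 'a set \<Rightarrow> 'a set" where
  "lie_comm L M N = gen_ideal L {lie L m x | m x. m \<in> M \<and> x \<in> N}"

text \<open>Lower Lie-central series, indexed as in the paper: gammaL L 1 = carrier,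
  gammaL L (i+1) = [gammaL L i, carrier]_Lie for i \<ge> 1.  (Index 0 is unused; set to carrier.)\<close>
fun gammaL :: "('k::field, 'a) leib \<Rightarrow> nat \<Rightarrow> 'a set" where
  "gammaL L 0 = lcarrier L"
| "gammaL L (Suc 0) = lcarrier L"
| "gammaL L (Suc (Suc i)) = lie_comm L (gammaL L (Suc i)) (lcarrier L)"

fun zetaL :: "('k::field, 'a) leib \<Rightarrow> nat \<Rightarrow> 'a set" where
  "zetaL L 0 = {lzero L}"
| "zetaL L (Suc i) = {x \<in> lcarrier L. \<forall>y\<in>lcarrier L. lie L x y \<in> zetaL L i}"

fun iter_lie :: "('k::field, 'a) leib \<Rightarrow> (nat \<Rightarrow> 'a) \<Rightarrow> nat \<Rightarrow> 'a" where
  "iter_lie L x 0 = x 0"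
| "iter_lie L x (Suc k) = lie L (iter_lie L x k) (x (Suc k))"

definition subalg :: "('k, 'a) leib \<Rightarrow> 'a set \<Rightarrow> ('k, 'a) leib" where
  "subalg L S = L\<lparr>lcarrier := S\<rparr>"

definition dsum :: "('k, 'a) leib \<Rightarrow> ('k, 'b) leib \<Rightarrow> ('k, 'a \<times> 'b) leib" where
  "dsum A B = \<lparr> lcarrier = lcarrier A \<times> lcarrier B,
      ladd = (\<lambda>(a, b) (a', b'). (ladd A a a', ladd B b b')),
      lzero = (lzero A, lzero B),
      lsmult = (\<lambda>c (a, b). (lsmult A c a, lsmult B c b)),
      lbr = (\<lambda>(a, b) (a', b'). (lbr A a a', lbr B b b')) \<rparr>"

definition coset :: "('k, 'a) leib \<Rightarrow> 'a \<Rightarrow> 'a set \<Rightarrow> 'a set" where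
  "coset L x I = {ladd L x i | i. i \<in> I}"

definition qrep :: "'a set \<Rightarrow> 'a" where
  "qrep X = (SOME x. x \<in> X)"

definition quot :: "('k, 'a) leib \<Rightarrow> 'a set \<Rightarrow> ('k, 'a set) leib" where
  "quot L I = \<lparr> lcarrier = (\<lambda>x. coset L x I) ` lcarrier L,
      ladd = (\<lambda>X Y. coset L (ladd L (qrep X) (qrep Y)) I),
      lzero = coset L (lzero L) I,
      lsmult = (\<lambda>c X. coset L (lsmult L c (qrep X)) I),
      lbr = (\<lambda>X Y. coset L (lbr L (qrep X) (qrep Y)) I) \<rparr>"

definition leib_hom :: "('a \<Rightarrow> 'b) \<Rightarrow> ('k, 'a) leib \<Rightarrow> ('k, 'b) leib \<Rightarrow> bool" where
  "leib_hom f A B \<longleftrightarrow>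
     (\<forall>x\<in>lcarrier A. f x \<in> lcarrier B) \<and>
     (\<forall>x\<in>lcarrier A. \<forall>y\<in>lcarrier A. f (ladd A x y) = ladd B (f x) (f y)) \<and>
     (\<forall>c. \<forall>x\<in>lcarrier A. f (lsmult A c x) = lsmult B c (f x)) \<and>
     (\<forall>x\<in>lcarrier A. \<forall>y\<in>lcarrier A. f (lbr A x y) = lbr B (f x) (f y))"

definition leib_iso :: "('a \<Rightarrow> 'b) \<Rightarrow> ('k, 'a) leib \<Rightarrow> ('k, 'b) leib \<Rightarrow> bool" where
  "leib_iso f A B \<longleftrightarrow> leib_hom f A B \<and> bij_betw f (lcarrier A) (lcarrier B)"

definition lie_isoclinism ::
  "nat \<Rightarrow> ('k::field, 'a) leib \<Rightarrow> ('k, 'b) leib \<Rightarrow> ('a set \<Rightarrow> 'b set) \<Rightarrow> ('a \<Rightarrow> 'b) \<Rightarrow> bool" where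
  "lie_isoclinism n A B \<eta> \<xi> \<longleftrightarrow>
     leib_iso \<eta> (quot A (zetaL A n)) (quot B (zetaL B n)) \<and>
     leib_iso \<xi> (subalg A (gammaL A (Suc n))) (subalg B (gammaL B (Suc n))) \<and>
     (\<forall>x y. (\<forall>i\<le>n. x i \<in> lcarrier A \<and> y i \<in> lcarrier B \<and>
                     \<eta> (coset A (x i) (zetaL A n)) = coset B (y i) (zetaL B n))
            \<longrightarrow> \<xi> (iter_lie A x n) = iter_lie B y n)"

definition lie_isoclinic :: "nat \<Rightarrow> ('k::field, 'a) leib \<Rightarrow> ('k, 'b) leib \<Rightarrow> bool" where
  "lie_isoclinic n A B \<longleftrightarrow> (\<exists>\<eta> \<xi>. lie_isoclinism n A B \<eta> \<xi>)"

definition Kset :: "nat \<Rightarrow> ('k::field, 'a) leib \<Rightarrow> ('k, 'b) leib \<Rightarrow> ('a set \<Rightarrow> 'b set) \<Rightarrow> ('a \<times> 'b) set" where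
  "Kset n A B \<eta> = {(g, h). g \<in> lcarrier A \<and> h \<in> lcarrier B \<and>
                       \<eta> (coset A g (zetaL A n)) = coset B h (zetaL B n)}"

definition Kalg :: "nat \<Rightarrow> ('k::field, 'a) leib \<Rightarrow> ('k, 'b) leib \<Rightarrow> ('a set \<Rightarrow> 'b set) \<Rightarrow> ('k, 'a \<times> 'b) leib" where
  "Kalg n A B \<eta> = subalg (dsum A B) (Kset n A B \<eta>)"

definition Zfst :: "nat \<Rightarrow> ('k::field, 'a) leib \<Rightarrow> ('k, 'b) leib \<Rightarrow> ('a \<times> 'b) set" where
  "Zfst n A B = {(g, lzero B) | g. g \<in> zetaL A n}"

definition Zsnd :: "nat \<Rightarrow> ('k::field, 'a) leib \<Rightarrow> ('k, 'b) leib \<Rightarrow> ('a \<times> 'b) set" where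
  "Zsnd n A B = {(lzero A, h) | h. h \<in> zetaL B n}"

end

theory Submission
  imports Defs
begin

definition lneg :: "('k::field, 'a) leib \<Rightarrow> 'a \<Rightarrow> 'a" where
  "lneg L x = lsmult L (-1) x"

definition subsp :: "('k::field, 'a) leib \<Rightarrow> 'a set \<Rightarrow> bool" where
  "subsp L I \<longleftrightarrow> I \<subseteq> lcarrier L \<and> lzero L \<in> I \<and>
     (\<forall>x\<in>I. \<forall>y\<in>I. ladd L x y \<in> I) \<and> (\<forall>c. \<forall>x\<in>I. lsmult L c x \<in> I)"

locale vs =
  fixes L :: "('k::field, 'a) leib"
  assumes vs: "vecspace L"
begin

lemmas vsd = vs[unfolded vecspace_def]

lemma zero_c[simp,intro]: "lzero L \<in> lcarrier L" using vsd[THEN conjunct1] by blast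
lemma add_c[simp,intro]: "x \<in> lcarrier L \<Longrightarrow> y \<in> lcarrier L \<Longrightarrow> ladd L x y \<in> lcarrier L"
  using vsd[THEN conjunct2, THEN conjunct1] by blast
lemma sm_c[simp,intro]: "x \<in> lcarrier L \<Longrightarrow> lsmult L c x \<in> lcarrier L"
  using vsd[THEN conjunct2, THEN conjunct2, THEN conjunct1] by blast
lemma neg_c[simp,intro]: "x \<in> lcarrier L \<Longrightarrow> lneg L x \<in> lcarrier L"
  by (simp add: lneg_def)
lemma add_assoc: "x \<in> lcarrier L \<Longrightarrow> y \<in> lcarrier L \<Longrightarrow> z \<in> lcarrier L \<Longrightarrow>
   ladd L (ladd L x y) z = ladd L x (ladd L y z)"
  using vsd[THEN conjunct2, THEN conjunct2, THEN conjunct2, THEN conjunct1] by blast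
lemma add_comm: "x \<in> lcarrier L \<Longrightarrow> y \<in> lcarrier L \<Longrightarrow> ladd L x y = ladd L y x"
  using vsd[THEN conjunct2, THEN conjunct2, THEN conjunct2, THEN conjunct2, THEN conjunct1] by blast
lemma add_lcomm: "x \<in> lcarrier L \<Longrightarrow> y \<in> lcarrier L \<Longrightarrow> z \<in> lcarrier L \<Longrightarrow>
   ladd L x (ladd L y z) = ladd L y (ladd L x z)"
proof -
  assume a: "x \<in> lcarrier L" "y \<in> lcarrier L" "z \<in> lcarrier L"
  have "ladd L x (ladd L y z) = ladd L (ladd L x y) z" using a add_assoc by simp
  also have "\<dots> = ladd L (ladd L y x) z" using a add_comm by simp
  also have "\<dots> = ladd L y (ladd L x z)" using a add_assoc by simp
  finally show ?thesis .
qed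
lemma zero_add[simp]: "x \<in> lcarrier L \<Longrightarrow> ladd L (lzero L) x = x"
  using vsd[THEN conjunct2, THEN conjunct2, THEN conjunct2, THEN conjunct2, THEN conjunct2, THEN conjunct1] by blast
lemma add_zero[simp]: "x \<in> lcarrier L \<Longrightarrow> ladd L x (lzero L) = x"
proof -
  assume "x \<in> lcarrier L" then show ?thesis using add_comm[of x "lzero L"] by simp
qed
lemma sm_add: "x \<in> lcarrier L \<Longrightarrow> y \<in> lcarrier L \<Longrightarrow>
   lsmult L c (ladd L x y) = ladd L (lsmult L c x) (lsmult L c y)"
  using vsd[THEN conjunct2, THEN conjunct2, THEN conjunct2, THEN conjunct2, THEN conjunct2, THEN conjunct2, THEN conjunct2, THEN conjunct1] by blast
lemma add_sm: "x \<in> lcarrier L \<Longrightarrow> lsmult L (c + d) x = ladd L (lsmult L c x) (lsmult L d x)"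
  using vsd[THEN conjunct2, THEN conjunct2, THEN conjunct2, THEN conjunct2, THEN conjunct2, THEN conjunct2, THEN conjunct2, THEN conjunct2, THEN conjunct1] by blast
lemma sm_sm: "x \<in> lcarrier L \<Longrightarrow> lsmult L (c * d) x = lsmult L c (lsmult L d x)"
  using vsd[THEN conjunct2, THEN conjunct2, THEN conjunct2, THEN conjunct2, THEN conjunct2, THEN conjunct2, THEN conjunct2, THEN conjunct2, THEN conjunct2, THEN conjunct1] by blast
lemma sm_one[simp]: "x \<in> lcarrier L \<Longrightarrow> lsmult L 1 x = x"
  using vsd[THEN conjunct2, THEN conjunct2, THEN conjunct2, THEN conjunct2, THEN conjunct2, THEN conjunct2, THEN conjunct2, THEN conjunct2, THEN conjunct2, THEN conjunct2] by blast
lemma has_inv: "x \<in> lcarrier L \<Longrightarrow> \<exists>y\<in>lcarrier L. ladd L x y = lzero L"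
  using vsd[THEN conjunct2, THEN conjunct2, THEN conjunct2, THEN conjunct2, THEN conjunct2, THEN conjunct2, THEN conjunct1] by blast

lemma add_left_cancel:
  assumes "x \<in> lcarrier L" "y \<in> lcarrier L" "z \<in> lcarrier L" "ladd L x y = ladd L x z"
  shows "y = z"
proof -
  obtain w where w: "w \<in> lcarrier L" "ladd L x w = lzero L" using has_inv assms(1) by blast
  have "ladd L w (ladd L x y) = ladd L w (ladd L x z)" using assms by simp
  then have "ladd L (ladd L w x) y = ladd L (ladd L w x) z" using w assms by (simp add: add_assoc)
  moreover have "ladd L w x = lzero L" using w assms add_comm by simp
  ultimately show ?thesis using assms by simp
qed

lemma sm_zero[simp]: "x \<in> lcarrier L \<Longrightarrow> lsmult L 0 x = lzero L"
proof -
  assume x: "x \<in> lcarrier L"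
  have "ladd L (lsmult L 0 x) (lsmult L 0 x) = ladd L (lsmult L 0 x) (lzero L)"
    using add_sm[OF x, of 0 0] x by simp
  then show ?thesis using add_left_cancel x by blast
qed

lemma add_neg[simp]: "x \<in> lcarrier L \<Longrightarrow> ladd L x (lneg L x) = lzero L"
proof -
  assume x: "x \<in> lcarrier L"
  have "ladd L x (lsmult L (-1) x) = ladd L (lsmult L 1 x) (lsmult L (-1) x)" using x by simp
  also have "\<dots> = lsmult L (1 + -1) x" using add_sm[OF x, of 1 "-1"] by simp
  finally show ?thesis using x by (simp add: lneg_def)
qed
lemma neg_add[simp]: "x \<in> lcarrier L \<Longrightarrow> ladd L (lneg L x) x = lzero L"
proof -
  assume "x \<in> lcarrier L" then show ?thesis using add_comm[of x "lneg L x"] by simp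
qed
lemma add_neg_cancel[simp]: "x \<in> lcarrier L \<Longrightarrow> y \<in> lcarrier L \<Longrightarrow> ladd L x (ladd L (lneg L x) y) = y"
  by (simp flip: add_assoc)
lemma neg_add_cancel[simp]: "x \<in> lcarrier L \<Longrightarrow> y \<in> lcarrier L \<Longrightarrow> ladd L (lneg L x) (ladd L x y) = y"
  by (simp flip: add_assoc)
lemma sm_zero_vec[simp]: "lsmult L c (lzero L) = lzero L"
proof -
  have "ladd L (lsmult L c (lzero L)) (lsmult L c (lzero L)) = ladd L (lsmult L c (lzero L)) (lzero L)"
    using sm_add[of "lzero L" "lzero L" c] by simp
  then show ?thesis using add_left_cancel by blast
qed
lemma neg_zero[simp]: "lneg L (lzero L) = lzero L" by (simp add: lneg_def)
lemma neg_neg[simp]: "x \<in> lcarrier L \<Longrightarrow> lneg L (lneg L x) = x"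
  unfolding lneg_def by (simp flip: sm_sm)
lemma neg_add_distrib: "x \<in> lcarrier L \<Longrightarrow> y \<in> lcarrier L \<Longrightarrow>
   lneg L (ladd L x y) = ladd L (lneg L x) (lneg L y)"
  unfolding lneg_def by (simp add: sm_add)
lemma neg_sm: "x \<in> lcarrier L \<Longrightarrow> lneg L (lsmult L c x) = lsmult L c (lneg L x)"
  unfolding lneg_def by (simp flip: sm_sm add: mult.commute)

lemmas add_ac = add_assoc add_comm add_lcomm

lemma add_right_cancel:
  assumes "x \<in> lcarrier L" "y \<in> lcarrier L" "z \<in> lcarrier L" "ladd L y x = ladd L z x"
  shows "y = z" using assms add_left_cancel[of x y z] add_comm[of x] by simp

lemma subsp_neg: "subsp L I \<Longrightarrow> x \<in> I \<Longrightarrow> lneg L x \<in> I"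
  by (simp add: subsp_def lneg_def)
lemma subsp_c: "subsp L I \<Longrightarrow> x \<in> I \<Longrightarrow> x \<in> lcarrier L"
  by (auto simp: subsp_def)
lemma subsp_add: "subsp L I \<Longrightarrow> x \<in> I \<Longrightarrow> y \<in> I \<Longrightarrow> ladd L x y \<in> I"
  by (simp add: subsp_def)
lemma subsp_sm: "subsp L I \<Longrightarrow> x \<in> I \<Longrightarrow> lsmult L c x \<in> I"
  by (simp add: subsp_def)
lemma subsp_zero: "subsp L I \<Longrightarrow> lzero L \<in> I"
  by (simp add: subsp_def)

lemma ideal_subsp: "ideal L I \<Longrightarrow> subsp L I"
  by (simp add: ideal_def subsp_def)

lemma coset_mem: "subsp L I \<Longrightarrow> a \<in> lcarrier L \<Longrightarrow> a \<in> coset L a I"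
  unfolding coset_def using subsp_zero add_zero by force

lemma coset_sub: "subsp L I \<Longrightarrow> a \<in> lcarrier L \<Longrightarrow> coset L a I \<subseteq> lcarrier L"
  unfolding coset_def using subsp_c by auto

lemma coset_eq_iff:
  assumes I: "subsp L I" and a: "a \<in> lcarrier L" and b: "b \<in> lcarrier L"
  shows "coset L a I = coset L b I \<longleftrightarrow> (\<exists>i\<in>I. a = ladd L b i)"
proof
  assume "coset L a I = coset L b I"
  then have "a \<in> coset L b I" using coset_mem[OF I a] by simp
  then show "\<exists>i\<in>I. a = ladd L b i" by (auto simp: coset_def)
next
  assume "\<exists>i\<in>I. a = ladd L b i"
  then obtain i where i: "i \<in> I" "a = ladd L b i" by blast
  have ic: "i \<in> lcarrier L" using subsp_c[OF I i(1)] .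
  show "coset L a I = coset L b I"
  proof (rule set_eqI)
    fix z
    show "z \<in> coset L a I \<longleftrightarrow> z \<in> coset L b I"
    proof
      assume "z \<in> coset L a I"
      then obtain j where j: "j \<in> I" "z = ladd L a j" by (auto simp: coset_def)
      have "z = ladd L b (ladd L i j)" using j i ic b subsp_c[OF I j(1)] by (simp add: add_assoc)
      then show "z \<in> coset L b I" using subsp_add[OF I i(1) j(1)] by (auto simp: coset_def)
    next
      assume "z \<in> coset L b I"
      then obtain j where j: "j \<in> I" "z = ladd L b j" by (auto simp: coset_def)
      have jc: "j \<in> lcarrier L" using subsp_c[OF I j(1)] .
      have "z = ladd L a (ladd L (lneg L i) j)" using j i ic b jc
        by (simp add: add_assoc)
      then show "z \<in> coset L a I" using subsp_add[OF I subsp_neg[OF I i(1)] j(1)] by (auto simp: coset_def)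
    qed
  qed
qed

lemma qrep_coset:
  assumes I: "subsp L I" and a: "a \<in> lcarrier L"
  shows "\<exists>i\<in>I. qrep (coset L a I) = ladd L a i"
proof -
  have "qrep (coset L a I) \<in> coset L a I"
    unfolding qrep_def using coset_mem[OF I a] by (rule someI)
  then show ?thesis by (auto simp: coset_def)
qed

lemma qrep_c: "subsp L I \<Longrightarrow> a \<in> lcarrier L \<Longrightarrow> qrep (coset L a I) \<in> lcarrier L"
  using qrep_coset[of I a] subsp_c[of I] by force

lemma coset_qrep: "subsp L I \<Longrightarrow> a \<in> lcarrier L \<Longrightarrow> coset L (qrep (coset L a I)) I = coset L a I"
proof -
  assume I: "subsp L I" and a: "a \<in> lcarrier L"
  then obtain i where "i\<in>I" "qrep (coset L a I) = ladd L a i" using qrep_coset by blast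
  then show ?thesis using coset_eq_iff[OF I qrep_c[OF I a] a] by blast
qed

lemma q_carrier: "lcarrier (quot L I) = (\<lambda>x. coset L x I) ` lcarrier L"
  by (simp add: quot_def)

lemma q_zero: "lzero (quot L I) = coset L (lzero L) I" by (simp add: quot_def)

lemma q_add:
  assumes I: "subsp L I" and a: "a \<in> lcarrier L" and b: "b \<in> lcarrier L"
  shows "ladd (quot L I) (coset L a I) (coset L b I) = coset L (ladd L a b) I"
proof -
  obtain i j where ij: "i \<in> I" "j \<in> I" "qrep (coset L a I) = ladd L a i" "qrep (coset L b I) = ladd L b j"
    using qrep_coset[OF I a] qrep_coset[OF I b] by blast
  have c: "i \<in> lcarrier L" "j \<in> lcarrier L" using ij subsp_c[OF I] by auto
  have "ladd L (ladd L a i) (ladd L b j) = ladd L (ladd L a b) (ladd L i j)"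
    using a b c by (simp add: add_ac)
  then have "coset L (ladd L (qrep (coset L a I)) (qrep (coset L b I))) I = coset L (ladd L a b) I"
    using ij a b c subsp_add[OF I ij(1) ij(2)] coset_eq_iff[OF I, of "ladd L (qrep (coset L a I)) (qrep (coset L b I))" "ladd L a b"] by (simp, blast)
  then show ?thesis by (simp add: quot_def)
qed

lemma q_sm:
  assumes I: "subsp L I" and a: "a \<in> lcarrier L"
  shows "lsmult (quot L I) c (coset L a I) = coset L (lsmult L c a) I"
proof -
  obtain i where ij: "i \<in> I" "qrep (coset L a I) = ladd L a i"
    using qrep_coset[OF I a] by blast
  have c: "i \<in> lcarrier L" using ij subsp_c[OF I] by auto
  have "coset L (lsmult L c (qrep (coset L a I))) I = coset L (lsmult L c a) I"
    using ij a c subsp_sm[OF I ij(1)] coset_eq_iff[OF I, of "lsmult L c (qrep (coset L a I))" "lsmult L c a"] sm_add[of a i c] by (simp, blast)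
  then show ?thesis by (simp add: quot_def)
qed

lemma q_neg:
  assumes I: "subsp L I" and a: "a \<in> lcarrier L"
  shows "lneg (quot L I) (coset L a I) = coset L (lneg L a) I"
  using q_sm[OF I a] by (simp add: lneg_def)

end


locale lb =
  fixes L :: "('k::field, 'a) leib"
  assumes lb: "leibniz L"
begin

sublocale vs L using lb by (unfold_locales) (simp add: leibniz_def)

lemmas lbd = lb[unfolded leibniz_def]

lemma br_c[simp,intro]: "x \<in> lcarrier L \<Longrightarrow> y \<in> lcarrier L \<Longrightarrow> lbr L x y \<in> lcarrier L"
  using lbd[THEN conjunct2, THEN conjunct1] by blast
lemma br_add_l: "x \<in> lcarrier L \<Longrightarrow> y \<in> lcarrier L \<Longrightarrow> z \<in> lcarrier L \<Longrightarrow>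
   lbr L (ladd L x y) z = ladd L (lbr L x z) (lbr L y z)"
  using lbd[THEN conjunct2, THEN conjunct2, THEN conjunct1] by blast
lemma br_add_r: "x \<in> lcarrier L \<Longrightarrow> y \<in> lcarrier L \<Longrightarrow> z \<in> lcarrier L \<Longrightarrow>
   lbr L x (ladd L y z) = ladd L (lbr L x y) (lbr L x z)"
  using lbd[THEN conjunct2, THEN conjunct2, THEN conjunct1] by blast
lemma br_sm_l: "x \<in> lcarrier L \<Longrightarrow> y \<in> lcarrier L \<Longrightarrow>
   lbr L (lsmult L c x) y = lsmult L c (lbr L x y)"
  using lbd[THEN conjunct2, THEN conjunct2, THEN conjunct2, THEN conjunct1] by blast
lemma br_sm_r: "x \<in> lcarrier L \<Longrightarrow> y \<in> lcarrier L \<Longrightarrow>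
   lbr L x (lsmult L c y) = lsmult L c (lbr L x y)"
  using lbd[THEN conjunct2, THEN conjunct2, THEN conjunct2, THEN conjunct1] by blast
lemma leib_id: "x \<in> lcarrier L \<Longrightarrow> y \<in> lcarrier L \<Longrightarrow> z \<in> lcarrier L \<Longrightarrow>
   lbr L x (lbr L y z) = ladd L (lbr L (lbr L x y) z) (lneg L (lbr L (lbr L x z) y))"
  using lbd[THEN conjunct2, THEN conjunct2, THEN conjunct2, THEN conjunct2]
  unfolding lsub_def lneg_def by blast

lemma br_zero_l[simp]: "y \<in> lcarrier L \<Longrightarrow> lbr L (lzero L) y = lzero L"
  using br_sm_l[of "lzero L" y 0] by simp
lemma br_zero_r[simp]: "y \<in> lcarrier L \<Longrightarrow> lbr L y (lzero L) = lzero L"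
  using br_sm_r[of y "lzero L" 0] by simp
lemma br_neg_l: "x \<in> lcarrier L \<Longrightarrow> y \<in> lcarrier L \<Longrightarrow> lbr L (lneg L x) y = lneg L (lbr L x y)"
  unfolding lneg_def by (simp add: br_sm_l)
lemma br_neg_r: "x \<in> lcarrier L \<Longrightarrow> y \<in> lcarrier L \<Longrightarrow> lbr L x (lneg L y) = lneg L (lbr L x y)"
  unfolding lneg_def by (simp add: br_sm_r)

lemma lie_c[simp,intro]: "x \<in> lcarrier L \<Longrightarrow> y \<in> lcarrier L \<Longrightarrow> lie L x y \<in> lcarrier L"
  by (simp add: lie_def)
lemma lie_sym: "x \<in> lcarrier L \<Longrightarrow> y \<in> lcarrier L \<Longrightarrow> lie L x y = lie L y x"
  unfolding lie_def using add_comm by simp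
lemma lie_add_l: "x \<in> lcarrier L \<Longrightarrow> y \<in> lcarrier L \<Longrightarrow> z \<in> lcarrier L \<Longrightarrow>
   lie L (ladd L x y) z = ladd L (lie L x z) (lie L y z)"
  unfolding lie_def by (simp add: br_add_l br_add_r add_assoc add_lcomm[of "lbr L z x"])
lemma lie_add_r: "x \<in> lcarrier L \<Longrightarrow> y \<in> lcarrier L \<Longrightarrow> z \<in> lcarrier L \<Longrightarrow>
   lie L z (ladd L x y) = ladd L (lie L z x) (lie L z y)"
  unfolding lie_def by (simp add: br_add_l br_add_r add_assoc add_lcomm[of "lbr L z y"])
lemma lie_sm_l: "x \<in> lcarrier L \<Longrightarrow> y \<in> lcarrier L \<Longrightarrow>
   lie L (lsmult L c x) y = lsmult L c (lie L x y)"
  unfolding lie_def by (simp add: br_sm_l br_sm_r sm_add)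
lemma lie_zero_l[simp]: "y \<in> lcarrier L \<Longrightarrow> lie L (lzero L) y = lzero L"
  by (simp add: lie_def)
lemma lie_zero_r[simp]: "y \<in> lcarrier L \<Longrightarrow> lie L y (lzero L) = lzero L"
  by (simp add: lie_def)

lemma br_lie_zero: "a \<in> lcarrier L \<Longrightarrow> b \<in> lcarrier L \<Longrightarrow> c \<in> lcarrier L \<Longrightarrow>
   lbr L a (lie L b c) = lzero L"
proof -
  assume a: "a \<in> lcarrier L" and b: "b \<in> lcarrier L" and c: "c \<in> lcarrier L"
  define P where "P = lbr L (lbr L a b) c"
  define Q where "Q = lbr L (lbr L a c) b"
  have PQ: "P \<in> lcarrier L" "Q \<in> lcarrier L" using a b c by (auto simp: P_def Q_def)
  have "lbr L a (lie L b c) = ladd L (lbr L a (lbr L b c)) (lbr L a (lbr L c b))"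
    unfolding lie_def using a b c by (simp add: br_add_r)
  also have "\<dots> = ladd L (ladd L P (lneg L Q)) (ladd L Q (lneg L P))"
    using a b c leib_id by (simp add: P_def Q_def)
  also have "\<dots> = lzero L" using PQ
    by (simp add: add_assoc)
  finally show ?thesis .
qed

lemma br_lie_l: "a \<in> lcarrier L \<Longrightarrow> b \<in> lcarrier L \<Longrightarrow> c \<in> lcarrier L \<Longrightarrow>
   lbr L (lie L b c) a = lie L (lie L b c) a"
  unfolding lie_def[of L "lie L b c" a] by (simp add: br_lie_zero)

lemma key_identity:
  assumes x: "x \<in> lcarrier L" and y: "y \<in> lcarrier L" and z: "z \<in> lcarrier L"
  shows "lie L (lbr L x z) y =
    ladd L (lie L x (lbr L z y)) (ladd L (lbr L (lie L x y) z) (lneg L (lie L (lie L z y) x)))"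
proof -
  define A where "A = lbr L (lbr L x z) y"
  define B where "B = lbr L (lbr L y x) z"
  define C where "C = lbr L (lbr L y z) x"
  define D where "D = lbr L (lbr L x y) z"
  define E where "E = lbr L (lbr L z y) x"
  have c: "A \<in> lcarrier L" "B \<in> lcarrier L" "C \<in> lcarrier L" "D \<in> lcarrier L" "E \<in> lcarrier L"
    using x y z by (auto simp: A_def B_def C_def D_def E_def)
  have l: "lie L (lbr L x z) y = ladd L A (ladd L B (lneg L C))"
    unfolding lie_def A_def B_def C_def using x y z leib_id by simp
  have r1: "lie L x (lbr L z y) = ladd L (ladd L A (lneg L D)) E"
    unfolding lie_def A_def D_def E_def using x y z leib_id by simp
  have r2: "lbr L (lie L x y) z = ladd L D B"
    unfolding lie_def B_def D_def using x y z by (simp add: br_add_l)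
  have r3: "lie L (lie L z y) x = ladd L E C"
  proof -
    have "lie L (lie L z y) x = lbr L (lie L z y) x" using br_lie_l x y z by simp
    then show ?thesis unfolding lie_def[of L z y] C_def E_def using x y z by (simp add: br_add_l)
  qed
  show ?thesis unfolding l r1 r2 r3 using c
    by (simp add: neg_add_distrib add_assoc add_lcomm[of E D] add_lcomm[of E B])
qed

end

context lb begin

lemma zeta_c: "zetaL L k \<subseteq> lcarrier L"
  by (cases k) auto

lemma zeta_cI: "x \<in> zetaL L k \<Longrightarrow> x \<in> lcarrier L"
  using zeta_c by blast

lemma zeta_zero[simp]: "lzero L \<in> zetaL L k"
  by (induction k) auto

lemma zeta_add: "x \<in> zetaL L k \<Longrightarrow> y \<in> zetaL L k \<Longrightarrow> ladd L x y \<in> zetaL L k"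
proof (induction k arbitrary: x y)
  case 0 then show ?case by simp
next
  case (Suc k)
  then show ?case by (auto simp: lie_add_l)
qed

lemma zeta_sm: "x \<in> zetaL L k \<Longrightarrow> lsmult L c x \<in> zetaL L k"
proof (induction k arbitrary: x)
  case 0 then show ?case by simp
next
  case (Suc k)
  then show ?case by (auto simp: lie_sm_l)
qed

lemma zeta_subsp: "subsp L (zetaL L k)"
  unfolding subsp_def using zeta_c zeta_add zeta_sm by auto

lemma zeta_neg: "x \<in> zetaL L k \<Longrightarrow> lneg L x \<in> zetaL L k"
  by (simp add: lneg_def zeta_sm)

lemma zeta_mono: "zetaL L k \<subseteq> zetaL L (Suc k)"
proof (induction k)
  case 0 then show ?case by auto
next
  case (Suc k)
  show ?case
  proof
    fix x assume x: "x \<in> zetaL L (Suc k)"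
    then show "x \<in> zetaL L (Suc (Suc k))" using Suc by auto
  qed
qed

lemma zeta_br_r: "x \<in> zetaL L k \<Longrightarrow> z \<in> lcarrier L \<Longrightarrow> lbr L x z \<in> zetaL L k"
proof (induction k arbitrary: x z)
  case 0 then show ?case by simp
next
  case (Suc k)
  have x: "x \<in> lcarrier L" using Suc.prems zeta_cI by blast
  have "lie L (lbr L x z) y \<in> zetaL L k" if y: "y \<in> lcarrier L" for y
  proof -
    have 1: "lie L x (lbr L z y) \<in> zetaL L k" using Suc.prems y by simp
    have 2: "lbr L (lie L x y) z \<in> zetaL L k" using Suc.prems y by (intro Suc.IH) auto
    have 3: "lie L (lie L z y) x \<in> zetaL L k"
      using Suc.prems y x lie_sym[of "lie L z y" x] by simp
    show ?thesis using key_identity[OF x y Suc.prems(2)] 1 2 3 zeta_add zeta_neg by simp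
  qed
  then show ?case using x Suc.prems by simp
qed

lemma zeta_br_l: "x \<in> zetaL L k \<Longrightarrow> z \<in> lcarrier L \<Longrightarrow> lbr L z x \<in> zetaL L k"
proof (cases k)
  case 0 then show "x \<in> zetaL L k \<Longrightarrow> z \<in> lcarrier L \<Longrightarrow> lbr L z x \<in> zetaL L k" by simp
next
  case (Suc m)
  assume x: "x \<in> zetaL L k" and z: "z \<in> lcarrier L"
  have xc: "x \<in> lcarrier L" using x zeta_cI by blast
  have "lbr L z x = ladd L (lie L x z) (lneg L (lbr L x z))"
    unfolding lie_def using xc z add_comm[of "lbr L x z" "lbr L z x"] by (simp add: add_assoc)
  moreover have "lie L x z \<in> zetaL L k" using x z Suc zeta_mono by auto
  moreover have "lbr L x z \<in> zetaL L k" using zeta_br_r x z by blast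
  ultimately show ?thesis using zeta_add zeta_neg by simp
qed

lemma zeta_ideal: "ideal L (zetaL L k)"
  unfolding ideal_def using zeta_c zeta_add zeta_sm zeta_br_l zeta_br_r by auto

lemma carrier_ideal: "ideal L (lcarrier L)"
  unfolding ideal_def by auto

lemma gen_ideal_ideal: "S \<subseteq> lcarrier L \<Longrightarrow> ideal L (gen_ideal L S)"
  unfolding gen_ideal_def ideal_def
  by (auto simp: carrier_ideal)

end

lemma gen_ideal_sup: "S \<subseteq> gen_ideal L S"
  unfolding gen_ideal_def by blast

lemma gen_ideal_least: "ideal L J \<Longrightarrow> S \<subseteq> J \<Longrightarrow> gen_ideal L S \<subseteq> J"
  unfolding gen_ideal_def by blast

context lb begin

lemma gamma_ideal: "ideal L (gammaL L k)"
proof (induction k)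
  case 0 then show ?case by (simp add: carrier_ideal)
next
  case (Suc k)
  show ?case
  proof (cases k)
    case 0 then show ?thesis by (simp add: carrier_ideal)
  next
    case (Suc i)
    have "gammaL L k \<subseteq> lcarrier L" using Suc.IH by (simp add: ideal_def)
    then have "{lie L m x | m x. m \<in> gammaL L k \<and> x \<in> lcarrier L} \<subseteq> lcarrier L" by auto
    then show ?thesis using Suc by (simp add: lie_comm_def gen_ideal_ideal)
  qed
qed

lemma gamma_c: "gammaL L k \<subseteq> lcarrier L"
  using gamma_ideal by (simp add: ideal_def)

lemma gamma_SS: "gammaL L (Suc (Suc i)) = gen_ideal L {lie L m x | m x. m \<in> gammaL L (Suc i) \<and> x \<in> lcarrier L}"
  by (simp add: lie_comm_def)

lemma lie_in_gamma: "m \<in> gammaL L (Suc i) \<Longrightarrow> x \<in> lcarrier L \<Longrightarrow> lie L m x \<in> gammaL L (Suc (Suc i))"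
proof -
  assume a: "m \<in> gammaL L (Suc i)" "x \<in> lcarrier L"
  have "lie L m x \<in> {lie L m x | m x. m \<in> gammaL L (Suc i) \<and> x \<in> lcarrier L}" using a by blast
  then show ?thesis unfolding gamma_SS by (rule subsetD[OF gen_ideal_sup])
qed

lemma iter_in_gamma: "(\<forall>i\<le>k. x i \<in> lcarrier L) \<Longrightarrow> iter_lie L x k \<in> gammaL L (Suc k)"
proof (induction k)
  case 0 then show ?case by simp
next
  case (Suc k)
  then have "iter_lie L x k \<in> gammaL L (Suc k)" "x (Suc k) \<in> lcarrier L" by auto
  then show ?case using lie_in_gamma by simp
qed

lemma iter_c: "(\<forall>i\<le>k. x i \<in> lcarrier L) \<Longrightarrow> iter_lie L x k \<in> lcarrier L"
  using iter_in_gamma gamma_c by blast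


end

lemma vecspace_I:
  assumes "lzero L \<in> lcarrier L"
    and "\<And>x y. x \<in> lcarrier L \<Longrightarrow> y \<in> lcarrier L \<Longrightarrow> ladd L x y \<in> lcarrier L"
    and "\<And>c x. x \<in> lcarrier L \<Longrightarrow> lsmult L c x \<in> lcarrier L"
    and "\<And>x y z. x \<in> lcarrier L \<Longrightarrow> y \<in> lcarrier L \<Longrightarrow> z \<in> lcarrier L \<Longrightarrow>
        ladd L (ladd L x y) z = ladd L x (ladd L y z)"
    and "\<And>x y. x \<in> lcarrier L \<Longrightarrow> y \<in> lcarrier L \<Longrightarrow> ladd L x y = ladd L y x"
    and "\<And>x. x \<in> lcarrier L \<Longrightarrow> ladd L (lzero L) x = x"
    and "\<And>x. x \<in> lcarrier L \<Longrightarrow> \<exists>y\<in>lcarrier L. ladd L x y = lzero L"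
    and "\<And>c x y. x \<in> lcarrier L \<Longrightarrow> y \<in> lcarrier L \<Longrightarrow>
        lsmult L c (ladd L x y) = ladd L (lsmult L c x) (lsmult L c y)"
    and "\<And>c d x. x \<in> lcarrier L \<Longrightarrow> lsmult L (c + d) x = ladd L (lsmult L c x) (lsmult L d x)"
    and "\<And>c d x. x \<in> lcarrier L \<Longrightarrow> lsmult L (c * d) x = lsmult L c (lsmult L d x)"
    and "\<And>x. x \<in> lcarrier L \<Longrightarrow> lsmult L 1 x = x"
  shows "vecspace L"
  unfolding vecspace_def apply (intro conjI ballI allI)
  apply (rule assms(1))
  apply (rule assms(2); assumption)
  apply (rule assms(3); assumption)
  apply (rule assms(4); assumption)
  apply (rule assms(5); assumption)
  apply (rule assms(6); assumption)
  apply (rule assms(7); assumption)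
  apply (rule assms(8); assumption)
  apply (rule assms(9); assumption)
  apply (rule assms(10); assumption)
  apply (rule assms(11); assumption)
  done

lemma leibniz_I:
  assumes "vecspace L"
    and "\<And>x y. x \<in> lcarrier L \<Longrightarrow> y \<in> lcarrier L \<Longrightarrow> lbr L x y \<in> lcarrier L"
    and "\<And>x y z. x \<in> lcarrier L \<Longrightarrow> y \<in> lcarrier L \<Longrightarrow> z \<in> lcarrier L \<Longrightarrow>
        lbr L (ladd L x y) z = ladd L (lbr L x z) (lbr L y z)"
    and "\<And>x y z. x \<in> lcarrier L \<Longrightarrow> y \<in> lcarrier L \<Longrightarrow> z \<in> lcarrier L \<Longrightarrow>
        lbr L x (ladd L y z) = ladd L (lbr L x y) (lbr L x z)"
    and "\<And>c x y. x \<in> lcarrier L \<Longrightarrow> y \<in> lcarrier L \<Longrightarrow> lbr L (lsmult L c x) y = lsmult L c (lbr L x y)"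
    and "\<And>c x y. x \<in> lcarrier L \<Longrightarrow> y \<in> lcarrier L \<Longrightarrow> lbr L x (lsmult L c y) = lsmult L c (lbr L x y)"
    and "\<And>x y z. x \<in> lcarrier L \<Longrightarrow> y \<in> lcarrier L \<Longrightarrow> z \<in> lcarrier L \<Longrightarrow>
        lbr L x (lbr L y z) = ladd L (lbr L (lbr L x y) z) (lsmult L (-1) (lbr L (lbr L x z) y))"
  shows "leibniz L"
  unfolding leibniz_def lsub_def apply (intro conjI ballI allI)
  apply (rule assms(1))
  apply (rule assms(2); assumption)
  apply (rule assms(3); assumption)
  apply (rule assms(4); assumption)
  apply (rule assms(5); assumption)
  apply (rule assms(6); assumption)
  apply (rule assms(7); assumption)
  done

context lb begin

lemma q_br:
  assumes I: "ideal L I" and a: "a \<in> lcarrier L" and b: "b \<in> lcarrier L"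
  shows "lbr (quot L I) (coset L a I) (coset L b I) = coset L (lbr L a b) I"
proof -
  have S: "subsp L I" using I by (rule ideal_subsp)
  obtain i j where ij: "i \<in> I" "j \<in> I" "qrep (coset L a I) = ladd L a i" "qrep (coset L b I) = ladd L b j"
    using qrep_coset[OF S a] qrep_coset[OF S b] by blast
  have c: "i \<in> lcarrier L" "j \<in> lcarrier L" using ij subsp_c[OF S] by auto
  have e: "lbr L (ladd L a i) (ladd L b j) = ladd L (lbr L a b) (ladd L (lbr L a j) (ladd L (lbr L i b) (lbr L i j)))"
    using a b c
    apply (simp add: br_add_l br_add_r add_assoc)
    apply (rule arg_cong[where f="ladd L (lbr L a b)"])
    apply (rule add_lcomm; simp)
    done
  have t: "ladd L (lbr L a j) (ladd L (lbr L i b) (lbr L i j)) \<in> I"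
    using I ij a b c unfolding ideal_def by simp
  have "coset L (lbr L (qrep (coset L a I)) (qrep (coset L b I))) I = coset L (lbr L a b) I"
    unfolding ij(3,4) e using coset_eq_iff[OF S, of "ladd L (lbr L a b) (ladd L (lbr L a j) (ladd L (lbr L i b) (lbr L i j)))" "lbr L a b"] t a b c
    by (simp, blast)
  then show ?thesis by (simp add: quot_def)
qed

end

locale lbq = lb +
  fixes I assumes I: "ideal L I"
begin

lemma S: "subsp L I" using I by (rule ideal_subsp)

lemma qc[simp,intro]: "a \<in> lcarrier L \<Longrightarrow> coset L a I \<in> lcarrier (quot L I)"
  by (simp add: quot_def)

lemma qadd[simp]: "a \<in> lcarrier L \<Longrightarrow> b \<in> lcarrier L \<Longrightarrow>
  ladd (quot L I) (coset L a I) (coset L b I) = coset L (ladd L a b) I"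
  using q_add[OF S] by blast
lemma qsm[simp]: "a \<in> lcarrier L \<Longrightarrow> lsmult (quot L I) c (coset L a I) = coset L (lsmult L c a) I"
  using q_sm[OF S] by blast
lemma qbr[simp]: "a \<in> lcarrier L \<Longrightarrow> b \<in> lcarrier L \<Longrightarrow>
  lbr (quot L I) (coset L a I) (coset L b I) = coset L (lbr L a b) I"
  using q_br[OF I] by blast
lemma qzero[simp]: "lzero (quot L I) = coset L (lzero L) I"
  by (simp add: quot_def)
lemma qcar: "lcarrier (quot L I) = (\<lambda>x. coset L x I) ` lcarrier L"
  by (simp add: quot_def)
lemma qE: "X \<in> lcarrier (quot L I) \<Longrightarrow> (\<And>x. x \<in> lcarrier L \<Longrightarrow> X = coset L x I \<Longrightarrow> P) \<Longrightarrow> P"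
  by (auto simp: qcar)

lemma quot_vs: "vecspace (quot L I)"
proof (rule vecspace_I)
  show "lzero (quot L I) \<in> lcarrier (quot L I)" by simp
  show "ladd (quot L I) x y \<in> lcarrier (quot L I)" if "x \<in> lcarrier (quot L I)" "y \<in> lcarrier (quot L I)" for x y
    using that by (elim qE) simp
  show "lsmult (quot L I) c x \<in> lcarrier (quot L I)" if "x \<in> lcarrier (quot L I)" for c x
    using that by (elim qE) simp
  show "ladd (quot L I) (ladd (quot L I) x y) z = ladd (quot L I) x (ladd (quot L I) y z)"
    if "x \<in> lcarrier (quot L I)" "y \<in> lcarrier (quot L I)" "z \<in> lcarrier (quot L I)" for x y z
    using that by (elim qE) (simp add: add_assoc)
  show "ladd (quot L I) x y = ladd (quot L I) y x" if "x \<in> lcarrier (quot L I)" "y \<in> lcarrier (quot L I)" for x y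
    using that by (elim qE) (simp add: add_comm)
  show "ladd (quot L I) (lzero (quot L I)) x = x" if "x \<in> lcarrier (quot L I)" for x
    using that by (elim qE) simp
  show "\<exists>y\<in>lcarrier (quot L I). ladd (quot L I) x y = lzero (quot L I)" if "x \<in> lcarrier (quot L I)" for x
  proof -
    have "x \<in> (\<lambda>x. coset L x I) ` lcarrier L" using that qcar by simp
    then obtain a where a: "a \<in> lcarrier L" "x = coset L a I" by blast
    show ?thesis by (rule bexI[of _ "coset L (lneg L a) I"]) (use a in simp_all)
  qed
  show "lsmult (quot L I) c (ladd (quot L I) x y) = ladd (quot L I) (lsmult (quot L I) c x) (lsmult (quot L I) c y)"
    if "x \<in> lcarrier (quot L I)" "y \<in> lcarrier (quot L I)" for c x y
    using that by (elim qE) (simp add: sm_add)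
  show "lsmult (quot L I) (c + d) x = ladd (quot L I) (lsmult (quot L I) c x) (lsmult (quot L I) d x)"
    if "x \<in> lcarrier (quot L I)" for c d x
    using that by (elim qE) (simp add: add_sm)
  show "lsmult (quot L I) (c * d) x = lsmult (quot L I) c (lsmult (quot L I) d x)"
    if "x \<in> lcarrier (quot L I)" for c d x
    using that by (elim qE) (simp add: sm_sm)
  show "lsmult (quot L I) 1 x = x" if "x \<in> lcarrier (quot L I)" for x
    using that by (elim qE) simp
qed

lemma quot_leibniz: "leibniz (quot L I)"
proof (rule leibniz_I[OF quot_vs])
  show "lbr (quot L I) x y \<in> lcarrier (quot L I)" if "x \<in> lcarrier (quot L I)" "y \<in> lcarrier (quot L I)" for x y
    using that by (elim qE) simp
  show "lbr (quot L I) (ladd (quot L I) x y) z = ladd (quot L I) (lbr (quot L I) x z) (lbr (quot L I) y z)"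
    if "x \<in> lcarrier (quot L I)" "y \<in> lcarrier (quot L I)" "z \<in> lcarrier (quot L I)" for x y z
    using that by (elim qE) (simp add: br_add_l)
  show "lbr (quot L I) x (ladd (quot L I) y z) = ladd (quot L I) (lbr (quot L I) x y) (lbr (quot L I) x z)"
    if "x \<in> lcarrier (quot L I)" "y \<in> lcarrier (quot L I)" "z \<in> lcarrier (quot L I)" for x y z
    using that by (elim qE) (simp add: br_add_r)
  show "lbr (quot L I) (lsmult (quot L I) c x) y = lsmult (quot L I) c (lbr (quot L I) x y)"
    if "x \<in> lcarrier (quot L I)" "y \<in> lcarrier (quot L I)" for c x y
    using that by (elim qE) (simp add: br_sm_l)
  show "lbr (quot L I) x (lsmult (quot L I) c y) = lsmult (quot L I) c (lbr (quot L I) x y)"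
    if "x \<in> lcarrier (quot L I)" "y \<in> lcarrier (quot L I)" for c x y
    using that by (elim qE) (simp add: br_sm_r)
  show "lbr (quot L I) x (lbr (quot L I) y z) = ladd (quot L I) (lbr (quot L I) (lbr (quot L I) x y) z) (lsmult (quot L I) (-1) (lbr (quot L I) (lbr (quot L I) x z) y))"
    if xyz: "x \<in> lcarrier (quot L I)" "y \<in> lcarrier (quot L I)" "z \<in> lcarrier (quot L I)" for x y z
  proof -
    obtain a b c where abc: "a \<in> lcarrier L" "b \<in> lcarrier L" "c \<in> lcarrier L"
      "x = coset L a I" "y = coset L b I" "z = coset L c I" using xyz by (elim qE) blast
    have e: "lbr L a (lbr L b c) = ladd L (lbr L (lbr L a b) c) (lsmult L (-1) (lbr L (lbr L a c) b))"
      using leib_id[OF abc(1-3)] by (simp add: lneg_def)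
    show ?thesis unfolding abc(4-6) using abc(1-3) by (simp add: e)
  qed
qed

end

lemma dsum_car[simp]: "lcarrier (dsum A B) = lcarrier A \<times> lcarrier B" by (simp add: dsum_def)
lemma dsum_add[simp]: "ladd (dsum A B) (a, b) (c, d) = (ladd A a c, ladd B b d)" by (simp add: dsum_def)
lemma dsum_zero[simp]: "lzero (dsum A B) = (lzero A, lzero B)" by (simp add: dsum_def)
lemma dsum_sm[simp]: "lsmult (dsum A B) k (a, b) = (lsmult A k a, lsmult B k b)" by (simp add: dsum_def)
lemma dsum_br[simp]: "lbr (dsum A B) (a, b) (c, d) = (lbr A a c, lbr B b d)" by (simp add: dsum_def)

lemma dsum_leibniz:
  assumes A: "leibniz A" and B: "leibniz B"
  shows "leibniz (dsum A B)"
proof -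
  interpret A: lb A by (rule lb.intro, rule A)
  interpret B: lb B by (rule lb.intro, rule B)
  have V: "vecspace (dsum A B)"
  proof (rule vecspace_I)
    show "\<exists>y\<in>lcarrier (dsum A B). ladd (dsum A B) x y = lzero (dsum A B)" if "x \<in> lcarrier (dsum A B)" for x
      using that by (cases x) (rule_tac x="(lneg A (fst x), lneg B (snd x))" in bexI, auto)
    show "ladd (dsum A B) x y = ladd (dsum A B) y x" if "x \<in> lcarrier (dsum A B)" "y \<in> lcarrier (dsum A B)" for x y
      using that by (cases x, cases y) (simp add: A.add_comm B.add_comm)
    show "lzero (dsum A B) \<in> lcarrier (dsum A B)" by simp
    show "ladd (dsum A B) x y \<in> lcarrier (dsum A B)" if "x \<in> lcarrier (dsum A B)" "y \<in> lcarrier (dsum A B)" for x y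
      using that by (cases x, cases y) simp
    show "lsmult (dsum A B) c x \<in> lcarrier (dsum A B)" if "x \<in> lcarrier (dsum A B)" for c x
      using that by (cases x) simp
    show "ladd (dsum A B) (ladd (dsum A B) x y) z = ladd (dsum A B) x (ladd (dsum A B) y z)"
      if "x \<in> lcarrier (dsum A B)" "y \<in> lcarrier (dsum A B)" "z \<in> lcarrier (dsum A B)" for x y z
      using that by (cases x, cases y, cases z) (simp add: A.add_assoc B.add_assoc)
    show "ladd (dsum A B) (lzero (dsum A B)) x = x" if "x \<in> lcarrier (dsum A B)" for x
      using that by (cases x) simp
    show "lsmult (dsum A B) c (ladd (dsum A B) x y) = ladd (dsum A B) (lsmult (dsum A B) c x) (lsmult (dsum A B) c y)"
      if "x \<in> lcarrier (dsum A B)" "y \<in> lcarrier (dsum A B)" for c x y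
      using that by (cases x, cases y) (simp add: A.sm_add B.sm_add)
    show "lsmult (dsum A B) (c + d) x = ladd (dsum A B) (lsmult (dsum A B) c x) (lsmult (dsum A B) d x)"
      if "x \<in> lcarrier (dsum A B)" for c d x
      using that by (cases x) (simp add: A.add_sm B.add_sm)
    show "lsmult (dsum A B) (c * d) x = lsmult (dsum A B) c (lsmult (dsum A B) d x)"
      if "x \<in> lcarrier (dsum A B)" for c d x
      using that by (cases x) (simp add: A.sm_sm B.sm_sm)
    show "lsmult (dsum A B) 1 x = x" if "x \<in> lcarrier (dsum A B)" for x
      using that by (cases x) simp
  qed
  show ?thesis
  proof (rule leibniz_I[OF V])
    show "lbr (dsum A B) x y \<in> lcarrier (dsum A B)" if "x \<in> lcarrier (dsum A B)" "y \<in> lcarrier (dsum A B)" for x y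
      using that by (cases x, cases y) simp
    show "lbr (dsum A B) (ladd (dsum A B) x y) z = ladd (dsum A B) (lbr (dsum A B) x z) (lbr (dsum A B) y z)"
      if "x \<in> lcarrier (dsum A B)" "y \<in> lcarrier (dsum A B)" "z \<in> lcarrier (dsum A B)" for x y z
      using that by (cases x, cases y, cases z) (simp add: A.br_add_l B.br_add_l)
    show "lbr (dsum A B) x (ladd (dsum A B) y z) = ladd (dsum A B) (lbr (dsum A B) x y) (lbr (dsum A B) x z)"
      if "x \<in> lcarrier (dsum A B)" "y \<in> lcarrier (dsum A B)" "z \<in> lcarrier (dsum A B)" for x y z
      using that by (cases x, cases y, cases z) (simp add: A.br_add_r B.br_add_r)
    show "lbr (dsum A B) (lsmult (dsum A B) c x) y = lsmult (dsum A B) c (lbr (dsum A B) x y)"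
      if "x \<in> lcarrier (dsum A B)" "y \<in> lcarrier (dsum A B)" for c x y
      using that by (cases x, cases y) (simp add: A.br_sm_l B.br_sm_l)
    show "lbr (dsum A B) x (lsmult (dsum A B) c y) = lsmult (dsum A B) c (lbr (dsum A B) x y)"
      if "x \<in> lcarrier (dsum A B)" "y \<in> lcarrier (dsum A B)" for c x y
      using that by (cases x, cases y) (simp add: A.br_sm_r B.br_sm_r)
    show "lbr (dsum A B) x (lbr (dsum A B) y z) = ladd (dsum A B) (lbr (dsum A B) (lbr (dsum A B) x y) z) (lsmult (dsum A B) (-1) (lbr (dsum A B) (lbr (dsum A B) x z) y))"
      if "x \<in> lcarrier (dsum A B)" "y \<in> lcarrier (dsum A B)" "z \<in> lcarrier (dsum A B)" for x y z
      using that by (cases x, cases y, cases z) (simp add: A.leib_id B.leib_id lneg_def)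
  qed
qed

lemma subalg_leibniz:
  assumes L: "leibniz L" and S: "S \<subseteq> lcarrier L" "lzero L \<in> S"
    and add: "\<And>x y. x \<in> S \<Longrightarrow> y \<in> S \<Longrightarrow> ladd L x y \<in> S"
    and sm: "\<And>c x. x \<in> S \<Longrightarrow> lsmult L c x \<in> S"
    and br: "\<And>x y. x \<in> S \<Longrightarrow> y \<in> S \<Longrightarrow> lbr L x y \<in> S"
  shows "leibniz (subalg L S)"
proof -
  interpret lb L by (rule lb.intro, rule L)
  have c: "\<And>x. x \<in> S \<Longrightarrow> x \<in> lcarrier L" using S by blast
  have V: "vecspace (subalg L S)"
  proof (rule vecspace_I)
    show "\<exists>y\<in>lcarrier (subalg L S). ladd (subalg L S) x y = lzero (subalg L S)" if "x \<in> lcarrier (subalg L S)" for x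
    proof -
      have x: "x \<in> S" using that by (simp add: subalg_def)
      have "lneg L x \<in> S" using x by (simp add: lneg_def sm)
      then show ?thesis using x c[OF x] by (intro bexI[of _ "lneg L x"]) (simp_all add: subalg_def)
    qed
    show "ladd (subalg L S) x y = ladd (subalg L S) y x" if "x \<in> lcarrier (subalg L S)" "y \<in> lcarrier (subalg L S)" for x y
      using that by (simp add: subalg_def c add_comm)
  qed (auto simp: subalg_def c S add sm add_assoc add_sm sm_add sm_sm)
  show ?thesis
  proof (rule leibniz_I[OF V])
  qed (auto simp: subalg_def c br br_add_l br_add_r br_sm_l br_sm_r leib_id lneg_def)
qed


definition good :: "nat \<Rightarrow> ('k::field, 'a) leib \<Rightarrow> bool" where
  "good n A \<longleftrightarrow> (\<forall>x y. (\<forall>i\<le>n. x i \<in> lcarrier A \<and> y i \<in> lcarrier A \<and>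
      coset A (x i) (zetaL A n) = coset A (y i) (zetaL A n)) \<longrightarrow> iter_lie A x n = iter_lie A y n)"

lemma hom_c: "leib_hom f A B \<Longrightarrow> x \<in> lcarrier A \<Longrightarrow> f x \<in> lcarrier B"
  by (simp add: leib_hom_def)
lemma hom_add: "leib_hom f A B \<Longrightarrow> x \<in> lcarrier A \<Longrightarrow> y \<in> lcarrier A \<Longrightarrow> f (ladd A x y) = ladd B (f x) (f y)"
  by (simp add: leib_hom_def)
lemma hom_sm: "leib_hom f A B \<Longrightarrow> x \<in> lcarrier A \<Longrightarrow> f (lsmult A c x) = lsmult B c (f x)"
  by (simp add: leib_hom_def)
lemma hom_br: "leib_hom f A B \<Longrightarrow> x \<in> lcarrier A \<Longrightarrow> y \<in> lcarrier A \<Longrightarrow> f (lbr A x y) = lbr B (f x) (f y)"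
  by (simp add: leib_hom_def)
lemma hom_lie: "leib_hom f A B \<Longrightarrow> x \<in> lcarrier A \<Longrightarrow> y \<in> lcarrier A \<Longrightarrow>
   lbr A x y \<in> lcarrier A \<Longrightarrow> lbr A y x \<in> lcarrier A \<Longrightarrow> f (lie A x y) = lie B (f x) (f y)"
  by (simp add: leib_hom_def lie_def)

lemma iso_good:
  assumes A: "leibniz A" and iso: "lie_isoclinism n A B \<eta> \<xi>"
  shows "good n A"
  unfolding good_def
proof (intro allI impI)
  fix x y
  assume xy: "\<forall>i\<le>n. x i \<in> lcarrier A \<and> y i \<in> lcarrier A \<and> coset A (x i) (zetaL A n) = coset A (y i) (zetaL A n)"
  interpret lb A by (rule lb.intro, rule A)
  have eta: "leib_iso \<eta> (quot A (zetaL A n)) (quot B (zetaL B n))" and xi: "leib_iso \<xi> (subalg A (gammaL A (Suc n))) (subalg B (gammaL B (Suc n)))"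
    and comp: "\<forall>x y. (\<forall>i\<le>n. x i \<in> lcarrier A \<and> y i \<in> lcarrier B \<and>
                     \<eta> (coset A (x i) (zetaL A n)) = coset B (y i) (zetaL B n))
            \<longrightarrow> \<xi> (iter_lie A x n) = iter_lie B y n"
    using iso unfolding lie_isoclinism_def by blast+
  have "\<exists>w. w \<in> lcarrier B \<and> \<eta> (coset A (x i) (zetaL A n)) = coset B w (zetaL B n)" if "i \<le> n" for i
  proof -
    have "coset A (x i) (zetaL A n) \<in> lcarrier (quot A (zetaL A n))" using xy that by (simp add: quot_def)
    then have "\<eta> (coset A (x i) (zetaL A n)) \<in> lcarrier (quot B (zetaL B n))"
      using eta by (simp add: leib_iso_def leib_hom_def)
    then show ?thesis by (auto simp: quot_def)
  qed
  then obtain w where w: "\<And>i. i \<le> n \<Longrightarrow> w i \<in> lcarrier B \<and> \<eta> (coset A (x i) (zetaL A n)) = coset B (w i) (zetaL B n)"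
    by metis
  have 1: "\<xi> (iter_lie A x n) = iter_lie B w n" using comp w xy by blast
  have 2: "\<xi> (iter_lie A y n) = iter_lie B w n" using comp[rule_format, of y w] w xy by force
  have inj: "inj_on \<xi> (gammaL A (Suc n))" using xi by (simp add: leib_iso_def bij_betw_def subalg_def)
  have "iter_lie A x n \<in> gammaL A (Suc n)" "iter_lie A y n \<in> gammaL A (Suc n)"
    using iter_in_gamma xy by auto
  then show "iter_lie A x n = iter_lie A y n" using inj 1 2 by (metis inj_onD)
qed

lemma iso_comp:
  assumes "leib_iso f A B" "leib_iso g B C"
  shows "leib_iso (g \<circ> f) A C"
  using assms unfolding leib_iso_def leib_hom_def
  by (auto intro: bij_betw_trans)

lemma lie_isoclinic_I: "lie_isoclinism n A B \<eta> \<xi> \<Longrightarrow> lie_isoclinic n A B"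
  unfolding lie_isoclinic_def by blast

lemma iso_trans:
  assumes i1: "lie_isoclinism n A B \<eta>1 \<xi>1" and i2: "lie_isoclinism n B C \<eta>2 \<xi>2"
  shows "lie_isoclinism n A C (\<eta>2 \<circ> \<eta>1) (\<xi>2 \<circ> \<xi>1)"
proof -
  have e1: "leib_iso \<eta>1 (quot A (zetaL A n)) (quot B (zetaL B n))"
    and x1: "leib_iso \<xi>1 (subalg A (gammaL A (Suc n))) (subalg B (gammaL B (Suc n)))"
    and c1: "\<forall>x y. (\<forall>i\<le>n. x i \<in> lcarrier A \<and> y i \<in> lcarrier B \<and>
                     \<eta>1 (coset A (x i) (zetaL A n)) = coset B (y i) (zetaL B n))
            \<longrightarrow> \<xi>1 (iter_lie A x n) = iter_lie B y n"
    using i1 unfolding lie_isoclinism_def by blast+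
  have e2: "leib_iso \<eta>2 (quot B (zetaL B n)) (quot C (zetaL C n))"
    and x2: "leib_iso \<xi>2 (subalg B (gammaL B (Suc n))) (subalg C (gammaL C (Suc n)))"
    and c2: "\<forall>x y. (\<forall>i\<le>n. x i \<in> lcarrier B \<and> y i \<in> lcarrier C \<and>
                     \<eta>2 (coset B (x i) (zetaL B n)) = coset C (y i) (zetaL C n))
            \<longrightarrow> \<xi>2 (iter_lie B x n) = iter_lie C y n"
    using i2 unfolding lie_isoclinism_def by blast+
  have comp: "(\<xi>2 \<circ> \<xi>1) (iter_lie A x n) = iter_lie C z n"
    if xz: "\<forall>i\<le>n. x i \<in> lcarrier A \<and> z i \<in> lcarrier C \<and>
                     (\<eta>2 \<circ> \<eta>1) (coset A (x i) (zetaL A n)) = coset C (z i) (zetaL C n)" for x z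
  proof -
    have "\<exists>w. w \<in> lcarrier B \<and> \<eta>1 (coset A (x i) (zetaL A n)) = coset B w (zetaL B n)" if "i \<le> n" for i
    proof -
      have "coset A (x i) (zetaL A n) \<in> lcarrier (quot A (zetaL A n))" using xz that by (simp add: quot_def)
      then have "\<eta>1 (coset A (x i) (zetaL A n)) \<in> lcarrier (quot B (zetaL B n))"
        using e1 by (simp add: leib_iso_def leib_hom_def)
      then show ?thesis by (auto simp: quot_def)
    qed
    then obtain w where w: "\<And>i. i \<le> n \<Longrightarrow> w i \<in> lcarrier B \<and> \<eta>1 (coset A (x i) (zetaL A n)) = coset B (w i) (zetaL B n)"
      by metis
    have 1: "\<xi>1 (iter_lie A x n) = iter_lie B w n" using c1 w xz by blast
    have 2: "\<xi>2 (iter_lie B w n) = iter_lie C z n" using c2[rule_format, of w z] w xz by force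
    show ?thesis using 1 2 by simp
  qed
  show ?thesis unfolding lie_isoclinism_def
    using iso_comp[OF e1 e2] iso_comp[OF x1 x2] comp by blast
qed

lemma inv_iso:
  assumes A: "leibniz A" and f: "leib_iso f A B"
  shows "leib_iso (inv_into (lcarrier A) f) B A"
proof -
  interpret lb A by (rule lb.intro, rule A)
  let ?g = "inv_into (lcarrier A) f"
  have bij: "bij_betw f (lcarrier A) (lcarrier B)" using f by (simp add: leib_iso_def)
  have h: "leib_hom f A B" using f by (simp add: leib_iso_def)
  have bg: "bij_betw ?g (lcarrier B) (lcarrier A)" using bij by (rule bij_betw_inv_into)
  have gc: "\<And>x. x \<in> lcarrier B \<Longrightarrow> ?g x \<in> lcarrier A" using bg bij_betwE by blast
  have fg: "\<And>x. x \<in> lcarrier B \<Longrightarrow> f (?g x) = x" using bij by (meson bij_betw_inv_into_right)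
  have gf: "\<And>x. x \<in> lcarrier A \<Longrightarrow> ?g (f x) = x" using bij by (meson bij_betw_inv_into_left)
  have "leib_hom ?g B A"
    unfolding leib_hom_def
  proof (intro conjI ballI allI)
    fix x y c assume x: "x \<in> lcarrier B" and y: "y \<in> lcarrier B"
    show "?g (ladd B x y) = ladd A (?g x) (?g y)"
      using hom_add[OF h gc[OF x] gc[OF y]] fg x y gf gc by (metis add_c)
    show "?g (lbr B x y) = lbr A (?g x) (?g y)"
      using hom_br[OF h gc[OF x] gc[OF y]] fg x y gf gc by (metis br_c)
  next
    fix x c assume x: "x \<in> lcarrier B"
    show "?g (lsmult B c x) = lsmult A c (?g x)"
      using hom_sm[OF h gc[OF x]] fg x gf gc by (metis sm_c)
  next
    fix x assume x: "x \<in> lcarrier B" then show "?g x \<in> lcarrier A" by (rule gc)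
  qed
  then show ?thesis using bg by (simp add: leib_iso_def)
qed

lemma quot_car_I: "x \<in> lcarrier A \<Longrightarrow> coset A x I \<in> lcarrier (quot A I)"
  by (simp add: quot_def)

lemma iso_sym:
  assumes A: "leibniz A" and B: "leibniz B" and i: "lie_isoclinism n A B \<eta> \<xi>"
  shows "lie_isoclinic n B A"
proof -
  interpret A: lb A by (rule lb.intro, rule A)
  interpret B: lb B by (rule lb.intro, rule B)
  interpret QA: lbq A "zetaL A n" by (unfold_locales) (rule A.zeta_ideal)
  have e: "leib_iso \<eta> (quot A (zetaL A n)) (quot B (zetaL B n))"
    and x: "leib_iso \<xi> (subalg A (gammaL A (Suc n))) (subalg B (gammaL B (Suc n)))"
    and c: "\<forall>x y. (\<forall>i\<le>n. x i \<in> lcarrier A \<and> y i \<in> lcarrier B \<and>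
                     \<eta> (coset A (x i) (zetaL A n)) = coset B (y i) (zetaL B n))
            \<longrightarrow> \<xi> (iter_lie A x n) = iter_lie B y n"
    using i unfolding lie_isoclinism_def by blast+
  have LG: "leibniz (subalg A (gammaL A (Suc n)))"
    using A.gamma_ideal[of "Suc n"] unfolding ideal_def
    by (intro subalg_leibniz[OF A]) auto
  define \<eta>' where "\<eta>' = inv_into (lcarrier (quot A (zetaL A n))) \<eta>"
  define \<xi>' where "\<xi>' = inv_into (gammaL A (Suc n)) \<xi>"
  have e': "leib_iso \<eta>' (quot B (zetaL B n)) (quot A (zetaL A n))"
    unfolding \<eta>'_def by (rule inv_iso[OF QA.quot_leibniz e])
  have x': "leib_iso \<xi>' (subalg B (gammaL B (Suc n))) (subalg A (gammaL A (Suc n)))"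
    unfolding \<xi>'_def using inv_iso[OF LG x] by (simp add: subalg_def)
  have bije: "bij_betw \<eta> (lcarrier (quot A (zetaL A n))) (lcarrier (quot B (zetaL B n)))"
    using e by (simp add: leib_iso_def)
  have bijx: "bij_betw \<xi> (gammaL A (Suc n)) (gammaL B (Suc n))"
    using x by (simp add: leib_iso_def subalg_def)
  have comp: "\<xi>' (iter_lie B y n) = iter_lie A x n"
    if yx: "\<forall>i\<le>n. y i \<in> lcarrier B \<and> x i \<in> lcarrier A \<and>
                     \<eta>' (coset B (y i) (zetaL B n)) = coset A (x i) (zetaL A n)" for x y
  proof -
    have "\<eta> (coset A (x i) (zetaL A n)) = coset B (y i) (zetaL B n)" if "i \<le> n" for i
    proof -
      have "coset B (y i) (zetaL B n) \<in> lcarrier (quot B (zetaL B n))" using yx that by (simp add: quot_def)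
      then have "\<eta> (\<eta>' (coset B (y i) (zetaL B n))) = coset B (y i) (zetaL B n)"
        unfolding \<eta>'_def using bije by (meson bij_betw_inv_into_right)
      then show ?thesis using yx that by simp
    qed
    then have "\<xi> (iter_lie A x n) = iter_lie B y n" using c yx by blast
    moreover have "iter_lie A x n \<in> gammaL A (Suc n)" using A.iter_in_gamma yx by auto
    ultimately show ?thesis unfolding \<xi>'_def using bijx by (metis bij_betw_inv_into_left)
  qed
  show ?thesis
    by (rule lie_isoclinic_I[of n B A \<eta>' \<xi>']) (unfold lie_isoclinism_def, use e' x' comp in blast)
qed

locale isoctx = A: lb A + B: lb B for A :: "('k::field, 'a) leib" and B :: "('k, 'b) leib" +
  fixes f assumes f: "leib_iso f A B"
begin

lemma h: "leib_hom f A B" using f by (simp add: leib_iso_def)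
lemma bij: "bij_betw f (lcarrier A) (lcarrier B)" using f by (simp add: leib_iso_def)
lemma fc[simp]: "x \<in> lcarrier A \<Longrightarrow> f x \<in> lcarrier B" using hom_c[OF h] .
lemma fadd[simp]: "x \<in> lcarrier A \<Longrightarrow> y \<in> lcarrier A \<Longrightarrow> f (ladd A x y) = ladd B (f x) (f y)" using hom_add[OF h] .
lemma fsm[simp]: "x \<in> lcarrier A \<Longrightarrow> f (lsmult A c x) = lsmult B c (f x)" using hom_sm[OF h] .
lemma fbr[simp]: "x \<in> lcarrier A \<Longrightarrow> y \<in> lcarrier A \<Longrightarrow> f (lbr A x y) = lbr B (f x) (f y)" using hom_br[OF h] .
lemma flie[simp]: "x \<in> lcarrier A \<Longrightarrow> y \<in> lcarrier A \<Longrightarrow> f (lie A x y) = lie B (f x) (f y)"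
  by (simp add: lie_def)
lemma fzero[simp]: "f (lzero A) = lzero B"
  using fsm[of "lzero A" 0] by simp
lemma finj: "x \<in> lcarrier A \<Longrightarrow> y \<in> lcarrier A \<Longrightarrow> f x = f y \<Longrightarrow> x = y"
  using bij by (meson bij_betw_def inj_onD)
lemma fsurj: "y \<in> lcarrier B \<Longrightarrow> \<exists>x\<in>lcarrier A. y = f x"
  using bij by (metis bij_betw_def imageE)

lemma fzeta: "x \<in> lcarrier A \<Longrightarrow> f x \<in> zetaL B k \<longleftrightarrow> x \<in> zetaL A k"
proof (induction k arbitrary: x)
  case 0
  then show ?case using finj[of x "lzero A"] by auto
next
  case (Suc k)
  have "(\<forall>y\<in>lcarrier B. lie B (f x) y \<in> zetaL B k) \<longleftrightarrow> (\<forall>y\<in>lcarrier A. lie A x y \<in> zetaL A k)"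
  proof
    assume a: "\<forall>y\<in>lcarrier B. lie B (f x) y \<in> zetaL B k"
    show "\<forall>y\<in>lcarrier A. lie A x y \<in> zetaL A k"
      using a Suc by (metis flie fc A.lie_c)
  next
    assume a: "\<forall>y\<in>lcarrier A. lie A x y \<in> zetaL A k"
    show "\<forall>y\<in>lcarrier B. lie B (f x) y \<in> zetaL B k"
      using a Suc fsurj by (metis flie A.lie_c)
  qed
  then show ?case using Suc.prems by simp
qed

lemma fzeta_img: "f ` zetaL A k = zetaL B k"
proof
  show "f ` zetaL A k \<subseteq> zetaL B k" using fzeta A.zeta_cI by blast
  show "zetaL B k \<subseteq> f ` zetaL A k"
  proof
    fix y assume y: "y \<in> zetaL B k"
    then obtain x where "x \<in> lcarrier A" "y = f x" using fsurj B.zeta_cI by blast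
    then show "y \<in> f ` zetaL A k" using y fzeta by blast
  qed
qed

lemma img_ideal: "ideal A J \<Longrightarrow> ideal B (f ` J)"
proof -
  assume J: "ideal A J"
  have Jc: "\<And>x. x \<in> J \<Longrightarrow> x \<in> lcarrier A" using J by (auto simp: ideal_def)
  show ?thesis unfolding ideal_def
  proof (intro conjI ballI allI)
    show "f ` J \<subseteq> lcarrier B" using Jc by auto
    show "lzero B \<in> f ` J" using J fzero by (metis ideal_def image_eqI)
  next
    fix x y assume "x \<in> f ` J" "y \<in> f ` J"
    then obtain a b where "a \<in> J" "b \<in> J" "x = f a" "y = f b" by blast
    then show "ladd B x y \<in> f ` J" using J Jc by (metis fadd ideal_def image_eqI)
  next
    fix c x assume "x \<in> f ` J"
    then obtain a where "a \<in> J" "x = f a" by blast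
    then show "lsmult B c x \<in> f ` J" using J Jc by (metis fsm ideal_def image_eqI)
  next
    fix x y assume "x \<in> f ` J" "y \<in> lcarrier B"
    then obtain a b where ab: "a \<in> J" "x = f a" "b \<in> lcarrier A" "y = f b" using fsurj by blast
    show "lbr B x y \<in> f ` J" using J Jc ab by (metis fbr ideal_def image_eqI)
    show "lbr B y x \<in> f ` J" using J Jc ab by (metis fbr ideal_def image_eqI)
  qed
qed

lemma pre_ideal: "ideal B J \<Longrightarrow> ideal A {x \<in> lcarrier A. f x \<in> J}"
  unfolding ideal_def by auto

lemma img_gen: "S \<subseteq> lcarrier A \<Longrightarrow> f ` gen_ideal A S = gen_ideal B (f ` S)"
proof
  assume S: "S \<subseteq> lcarrier A"
  have fS: "f ` S \<subseteq> lcarrier B" using S by auto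
  have "gen_ideal A S \<subseteq> {x \<in> lcarrier A. f x \<in> gen_ideal B (f ` S)}"
    by (rule gen_ideal_least[OF pre_ideal[OF B.gen_ideal_ideal[OF fS]]])
       (use S gen_ideal_sup[of "f ` S" B] in auto)
  then show "f ` gen_ideal A S \<subseteq> gen_ideal B (f ` S)" by auto
  show "gen_ideal B (f ` S) \<subseteq> f ` gen_ideal A S"
    by (rule gen_ideal_least[OF img_ideal[OF A.gen_ideal_ideal[OF S]]])
       (use gen_ideal_sup[of S A] in auto)
qed

lemma img_lieset: "M \<subseteq> lcarrier A \<Longrightarrow>
  f ` {lie A m x | m x. m \<in> M \<and> x \<in> lcarrier A} = {lie B m x | m x. m \<in> f ` M \<and> x \<in> lcarrier B}"
proof
  assume M: "M \<subseteq> lcarrier A"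
  show "f ` {lie A m x | m x. m \<in> M \<and> x \<in> lcarrier A} \<subseteq> {lie B m x | m x. m \<in> f ` M \<and> x \<in> lcarrier B}"
  proof
    fix z assume "z \<in> f ` {lie A m x | m x. m \<in> M \<and> x \<in> lcarrier A}"
    then obtain m x where mx: "m \<in> M" "x \<in> lcarrier A" "z = f (lie A m x)" by blast
    then have "z = lie B (f m) (f x)" using M by auto
    moreover have "f m \<in> f ` M" "f x \<in> lcarrier B" using mx by auto
    ultimately show "z \<in> {lie B m x | m x. m \<in> f ` M \<and> x \<in> lcarrier B}" by blast
  qed
  show "{lie B m x | m x. m \<in> f ` M \<and> x \<in> lcarrier B} \<subseteq> f ` {lie A m x | m x. m \<in> M \<and> x \<in> lcarrier A}"
  proof
    fix z assume "z \<in> {lie B m x | m x. m \<in> f ` M \<and> x \<in> lcarrier B}"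
    then obtain m x where mx: "m \<in> M" "x \<in> lcarrier B" "z = lie B (f m) x" by blast
    obtain x' where x': "x' \<in> lcarrier A" "x = f x'" using fsurj mx(2) by blast
    have "z = f (lie A m x')" using mx x' M by auto
    then show "z \<in> f ` {lie A m x | m x. m \<in> M \<and> x \<in> lcarrier A}" using mx x' by blast
  qed
qed

lemma fgamma: "f ` gammaL A k = gammaL B k"
proof (induction k)
  case 0 then show ?case using bij by (simp add: bij_betw_def)
next
  case (Suc k)
  show ?case
  proof (cases k)
    case 0 then show ?thesis using bij by (simp add: bij_betw_def)
  next
    case (Suc i)
    have "f ` gammaL A (Suc k) = f ` gen_ideal A {lie A m x | m x. m \<in> gammaL A k \<and> x \<in> lcarrier A}"
      using Suc by (simp add: lie_comm_def)
    also have "\<dots> = gen_ideal B (f ` {lie A m x | m x. m \<in> gammaL A k \<and> x \<in> lcarrier A})"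
      using A.gamma_c by (intro img_gen) auto
    also have "\<dots> = gen_ideal B {lie B m x | m x. m \<in> gammaL B k \<and> x \<in> lcarrier B}"
      using img_lieset[OF A.gamma_c] Suc.IH by simp
    also have "\<dots> = gammaL B (Suc k)" using Suc by (simp add: lie_comm_def)
    finally show ?thesis .
  qed
qed

lemma fiter: "(\<forall>i\<le>k. x i \<in> lcarrier A) \<Longrightarrow> f (iter_lie A x k) = iter_lie B (f \<circ> x) k"
proof (induction k)
  case 0 then show ?case by simp
next
  case (Suc k)
  then show ?case using A.iter_c[of k x] by simp
qed

end

context isoctx begin

definition "etaf n X = coset B (f (qrep X)) (zetaL B n)"

lemma etaf_coset: "a \<in> lcarrier A \<Longrightarrow> etaf n (coset A a (zetaL A n)) = coset B (f a) (zetaL B n)"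
proof -
  assume a: "a \<in> lcarrier A"
  obtain i where i: "i \<in> zetaL A n" "qrep (coset A a (zetaL A n)) = ladd A a i"
    using A.qrep_coset[OF A.zeta_subsp a] by blast
  have ic: "i \<in> lcarrier A" using i A.zeta_cI by blast
  have "f i \<in> zetaL B n" using fzeta ic i by blast
  then show ?thesis unfolding etaf_def i(2) using a ic
    B.coset_eq_iff[OF B.zeta_subsp, of "ladd B (f a) (f i)" "f a"] by auto
qed

lemma etaf_iso: "leib_iso (etaf n) (quot A (zetaL A n)) (quot B (zetaL B n))"
proof -
  interpret QA: lbq A "zetaL A n" by (unfold_locales) (rule A.zeta_ideal)
  interpret QB: lbq B "zetaL B n" by (unfold_locales) (rule B.zeta_ideal)
  have hom: "leib_hom (etaf n) (quot A (zetaL A n)) (quot B (zetaL B n))"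
    unfolding leib_hom_def
  proof (intro conjI ballI allI)
    fix x assume "x \<in> lcarrier (quot A (zetaL A n))"
    then show "etaf n x \<in> lcarrier (quot B (zetaL B n))" by (elim QA.qE) (simp add: etaf_coset)
  next
    fix x y assume "x \<in> lcarrier (quot A (zetaL A n))" "y \<in> lcarrier (quot A (zetaL A n))"
    then show "etaf n (ladd (quot A (zetaL A n)) x y) = ladd (quot B (zetaL B n)) (etaf n x) (etaf n y)"
      by (elim QA.qE) (simp add: etaf_coset)
  next
    fix x y assume "x \<in> lcarrier (quot A (zetaL A n))" "y \<in> lcarrier (quot A (zetaL A n))"
    then show "etaf n (lbr (quot A (zetaL A n)) x y) = lbr (quot B (zetaL B n)) (etaf n x) (etaf n y)"
      by (elim QA.qE) (simp add: etaf_coset)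
  next
    fix c x assume "x \<in> lcarrier (quot A (zetaL A n))"
    then show "etaf n (lsmult (quot A (zetaL A n)) c x) = lsmult (quot B (zetaL B n)) c (etaf n x)"
      by (elim QA.qE) (simp add: etaf_coset)
  qed
  have inj: "inj_on (etaf n) (lcarrier (quot A (zetaL A n)))"
  proof (rule inj_onI)
    fix x y assume x: "x \<in> lcarrier (quot A (zetaL A n))" and y: "y \<in> lcarrier (quot A (zetaL A n))"
      and e: "etaf n x = etaf n y"
    obtain a b where ab: "a \<in> lcarrier A" "b \<in> lcarrier A" "x = coset A a (zetaL A n)" "y = coset A b (zetaL A n)"
      using x y by (elim QA.qE) blast
    have "coset B (f a) (zetaL B n) = coset B (f b) (zetaL B n)" using e ab by (simp add: etaf_coset)
    then obtain j where j: "j \<in> zetaL B n" "f a = ladd B (f b) j"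
      using B.coset_eq_iff[OF B.zeta_subsp] ab by auto
    obtain j' where j': "j' \<in> zetaL A n" "j = f j'" using j fzeta_img by blast
    have j'c: "j' \<in> lcarrier A" using j' A.zeta_cI by blast
    have "a = ladd A b j'" using finj[of a "ladd A b j'"] j j' j'c ab by simp
    then show "x = y" using ab j' A.coset_eq_iff[OF A.zeta_subsp] j'c by auto
  qed
  have img: "etaf n ` lcarrier (quot A (zetaL A n)) = lcarrier (quot B (zetaL B n))"
  proof
    show "etaf n ` lcarrier (quot A (zetaL A n)) \<subseteq> lcarrier (quot B (zetaL B n))"
      using hom by (auto simp: leib_hom_def)
    show "lcarrier (quot B (zetaL B n)) \<subseteq> etaf n ` lcarrier (quot A (zetaL A n))"
    proof
      fix Y assume "Y \<in> lcarrier (quot B (zetaL B n))"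
      then obtain b where b: "b \<in> lcarrier B" "Y = coset B b (zetaL B n)" by (elim QB.qE) blast
      obtain a where a: "a \<in> lcarrier A" "b = f a" using fsurj b by blast
      show "Y \<in> etaf n ` lcarrier (quot A (zetaL A n))"
        using a b etaf_coset[OF a(1)] QA.qc[OF a(1)] by (metis image_eqI)
    qed
  qed
  show ?thesis using hom inj img by (simp add: leib_iso_def bij_betw_def)
qed

lemma f_gamma_iso: "leib_iso f (subalg A (gammaL A k)) (subalg B (gammaL B k))"
proof -
  have gc: "\<And>x. x \<in> gammaL A k \<Longrightarrow> x \<in> lcarrier A" using A.gamma_c by blast
  have "leib_hom f (subalg A (gammaL A k)) (subalg B (gammaL B k))"
    unfolding leib_hom_def subalg_def using fgamma gc by auto
  moreover have "bij_betw f (gammaL A k) (gammaL B k)"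
    unfolding bij_betw_def using fgamma gc inj_on_subset bij by (metis bij_betw_def subsetI)
  ultimately show ?thesis by (simp add: leib_iso_def subalg_def)
qed

lemma iso_isoclinism:
  assumes gB: "good n B"
  shows "lie_isoclinism n A B (etaf n) f"
  unfolding lie_isoclinism_def
proof (intro conjI etaf_iso f_gamma_iso allI impI)
  fix x y
  assume xy: "\<forall>i\<le>n. x i \<in> lcarrier A \<and> y i \<in> lcarrier B \<and>
            etaf n (coset A (x i) (zetaL A n)) = coset B (y i) (zetaL B n)"
  have "iter_lie B (f \<circ> x) n = iter_lie B y n"
  proof -
    have "\<forall>i\<le>n. (f \<circ> x) i \<in> lcarrier B \<and> y i \<in> lcarrier B \<and>
            coset B ((f \<circ> x) i) (zetaL B n) = coset B (y i) (zetaL B n)"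
      using xy etaf_coset by (metis comp_apply fc)
    then show ?thesis using gB unfolding good_def by blast
  qed
  then show "f (iter_lie A x n) = iter_lie B y n" using fiter xy by simp
qed

end

lemma iso_isoclinic:
  assumes A: "leibniz A" and B: "leibniz B" and f: "leib_iso f A B" and g: "good n B"
  shows "lie_isoclinic n A B"
proof -
  interpret isoctx A B f by (unfold_locales) (rule A, rule B, rule f)
  show ?thesis using iso_isoclinism[OF g] by (rule lie_isoclinic_I)
qed


lemma lie_dsum[simp]: "lie (dsum A B) (a, b) (c, d) = (lie A a c, lie B b d)"
  by (simp add: lie_def)

lemma iter_dsum: "iter_lie (dsum A B) y k = (iter_lie A (fst \<circ> y) k, iter_lie B (snd \<circ> y) k)"
proof (induction k)
  case 0 then show ?case by simp
next
  case (Suc k)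
  then show ?case by (cases "y (Suc k)") simp
qed

locale nctx = A: lb A + N: lb N for A :: "('k::field, 'a) leib" and N :: "('k, 'b) leib" +
  fixes n assumes zN: "zetaL N n = lcarrier N" and gA: "good n A"
begin

abbreviation "D \<equiv> dsum A N"

sublocale D: lb D by (rule lb.intro, rule dsum_leibniz, rule A.lb, rule N.lb)

lemma zeta_dsum: "zetaL D k = zetaL A k \<times> zetaL N k"
proof (induction k)
  case 0 then show ?case by simp
next
  case (Suc k)
  show ?case
  proof (rule set_eqI)
    fix p :: "'a \<times> 'b"
    obtain a b where p: "p = (a, b)" by (cases p)
    have "p \<in> zetaL D (Suc k) \<longleftrightarrow> a \<in> lcarrier A \<and> b \<in> lcarrier N \<and>
       (\<forall>c\<in>lcarrier A. \<forall>d\<in>lcarrier N. lie A a c \<in> zetaL A k \<and> lie N b d \<in> zetaL N k)"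
      using Suc by (auto simp: p)
    also have "\<dots> \<longleftrightarrow> p \<in> zetaL A (Suc k) \<times> zetaL N (Suc k)"
      by (auto simp: p intro: A.zero_c N.zero_c)
    finally show "p \<in> zetaL D (Suc k) \<longleftrightarrow> p \<in> zetaL A (Suc k) \<times> zetaL N (Suc k)" .
  qed
qed

lemma ideal_prod: "ideal A J1 \<Longrightarrow> ideal N J2 \<Longrightarrow> ideal D (J1 \<times> J2)"
  unfolding ideal_def by auto

lemma liecomm_dsum:
  assumes M1: "M1 \<subseteq> lcarrier A" "lzero A \<in> M1" and M2: "M2 \<subseteq> lcarrier N" "lzero N \<in> M2"
  shows "lie_comm D (M1 \<times> M2) (lcarrier A \<times> lcarrier N) =
         lie_comm A M1 (lcarrier A) \<times> lie_comm N M2 (lcarrier N)"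
proof
  let ?G = "{lie D m x | m x. m \<in> M1 \<times> M2 \<and> x \<in> lcarrier A \<times> lcarrier N}"
  let ?G1 = "{lie A m x | m x. m \<in> M1 \<and> x \<in> lcarrier A}"
  let ?G2 = "{lie N m x | m x. m \<in> M2 \<and> x \<in> lcarrier N}"
  have G1c: "?G1 \<subseteq> lcarrier A" using M1 by auto
  have G2c: "?G2 \<subseteq> lcarrier N" using M2 by auto
  show "lie_comm D (M1 \<times> M2) (lcarrier A \<times> lcarrier N) \<subseteq> lie_comm A M1 (lcarrier A) \<times> lie_comm N M2 (lcarrier N)"
    unfolding lie_comm_def
  proof (rule gen_ideal_least[OF ideal_prod[OF A.gen_ideal_ideal[OF G1c] N.gen_ideal_ideal[OF G2c]]])
    show "?G \<subseteq> gen_ideal A ?G1 \<times> gen_ideal N ?G2"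
    proof
      fix z assume "z \<in> ?G"
      then obtain a b c d where z: "a \<in> M1" "b \<in> M2" "c \<in> lcarrier A" "d \<in> lcarrier N"
        "z = (lie A a c, lie N b d)" by auto
      then have "lie A a c \<in> ?G1" "lie N b d \<in> ?G2" by blast+
      then show "z \<in> gen_ideal A ?G1 \<times> gen_ideal N ?G2"
        using z gen_ideal_sup[of ?G1 A] gen_ideal_sup[of ?G2 N] by auto
    qed
  qed
  show "lie_comm A M1 (lcarrier A) \<times> lie_comm N M2 (lcarrier N) \<subseteq> lie_comm D (M1 \<times> M2) (lcarrier A \<times> lcarrier N)"
    unfolding lie_comm_def gen_ideal_def[of D]
  proof (intro subsetI InterI)
    fix p I assume p: "p \<in> gen_ideal A ?G1 \<times> gen_ideal N ?G2" and I: "I \<in> {I. ideal D I \<and> ?G \<subseteq> I}"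
    have Iid: "ideal D I" and GI: "?G \<subseteq> I" using I by auto
    have Iadd: "\<And>x y. x \<in> I \<Longrightarrow> y \<in> I \<Longrightarrow> ladd D x y \<in> I"
      and Ism: "\<And>c x. x \<in> I \<Longrightarrow> lsmult D c x \<in> I"
      and Ibr: "\<And>x y. x \<in> I \<Longrightarrow> y \<in> lcarrier D \<Longrightarrow> lbr D x y \<in> I \<and> lbr D y x \<in> I"
      and I0: "lzero D \<in> I"
      using Iid unfolding ideal_def by blast+
    have J1: "ideal A {u \<in> lcarrier A. (u, lzero N) \<in> I}"
      unfolding ideal_def
    proof (intro conjI ballI allI)
      show "lzero A \<in> {u \<in> lcarrier A. (u, lzero N) \<in> I}" using I0 by simp
    next
      fix x y assume "x \<in> {u \<in> lcarrier A. (u, lzero N) \<in> I}" "y \<in> {u \<in> lcarrier A. (u, lzero N) \<in> I}"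
      then show "ladd A x y \<in> {u \<in> lcarrier A. (u, lzero N) \<in> I}" using Iadd[of "(x, lzero N)" "(y, lzero N)"] by simp
    next
      fix c x assume "x \<in> {u \<in> lcarrier A. (u, lzero N) \<in> I}"
      then show "lsmult A c x \<in> {u \<in> lcarrier A. (u, lzero N) \<in> I}" using Ism[of "(x, lzero N)" c] by simp
    next
      fix x y assume x: "x \<in> {u \<in> lcarrier A. (u, lzero N) \<in> I}" and y: "y \<in> lcarrier A"
      have "(y, lzero N) \<in> lcarrier D" using y by simp
      then have "lbr D (x, lzero N) (y, lzero N) \<in> I \<and> lbr D (y, lzero N) (x, lzero N) \<in> I" using Ibr x by blast
      then show "lbr A x y \<in> {u \<in> lcarrier A. (u, lzero N) \<in> I}" "lbr A y x \<in> {u \<in> lcarrier A. (u, lzero N) \<in> I}"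
        using x y by auto
    qed auto
    have J2: "ideal N {v \<in> lcarrier N. (lzero A, v) \<in> I}"
      unfolding ideal_def
    proof (intro conjI ballI allI)
      show "lzero N \<in> {v \<in> lcarrier N. (lzero A, v) \<in> I}" using I0 by simp
    next
      fix x y assume "x \<in> {v \<in> lcarrier N. (lzero A, v) \<in> I}" "y \<in> {v \<in> lcarrier N. (lzero A, v) \<in> I}"
      then show "ladd N x y \<in> {v \<in> lcarrier N. (lzero A, v) \<in> I}" using Iadd[of "(lzero A, x)" "(lzero A, y)"] by simp
    next
      fix c x assume "x \<in> {v \<in> lcarrier N. (lzero A, v) \<in> I}"
      then show "lsmult N c x \<in> {v \<in> lcarrier N. (lzero A, v) \<in> I}" using Ism[of "(lzero A, x)" c] by simp
    next
      fix x y assume x: "x \<in> {v \<in> lcarrier N. (lzero A, v) \<in> I}" and y: "y \<in> lcarrier N"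
      have "(lzero A, y) \<in> lcarrier D" using y by simp
      then have "lbr D (lzero A, x) (lzero A, y) \<in> I \<and> lbr D (lzero A, y) (lzero A, x) \<in> I" using Ibr x by blast
      then show "lbr N x y \<in> {v \<in> lcarrier N. (lzero A, v) \<in> I}" "lbr N y x \<in> {v \<in> lcarrier N. (lzero A, v) \<in> I}"
        using x y by auto
    qed auto
    have s1: "?G1 \<subseteq> {u \<in> lcarrier A. (u, lzero N) \<in> I}"
    proof
      fix u assume "u \<in> ?G1"
      then obtain a c where ac: "a \<in> M1" "c \<in> lcarrier A" "u = lie A a c" by blast
      have "(u, lzero N) = lie D (a, lzero N) (c, lzero N)" using ac by simp
      moreover have "lie D (a, lzero N) (c, lzero N) \<in> ?G" using ac M2 by blast
      then have "lie D (a, lzero N) (c, lzero N) \<in> I" by (rule subsetD[OF GI])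
      ultimately have "(u, lzero N) \<in> I" by simp
      moreover have "u \<in> lcarrier A" using ac M1 by auto
      ultimately show "u \<in> {u \<in> lcarrier A. (u, lzero N) \<in> I}" by simp
    qed
    have s2: "?G2 \<subseteq> {v \<in> lcarrier N. (lzero A, v) \<in> I}"
    proof
      fix v assume "v \<in> ?G2"
      then obtain b d where bd: "b \<in> M2" "d \<in> lcarrier N" "v = lie N b d" by blast
      have "(lzero A, v) = lie D (lzero A, b) (lzero A, d)" using bd by simp
      moreover have "lie D (lzero A, b) (lzero A, d) \<in> ?G" using bd M1 by blast
      then have "lie D (lzero A, b) (lzero A, d) \<in> I" by (rule subsetD[OF GI])
      ultimately have "(lzero A, v) \<in> I" by simp
      moreover have "v \<in> lcarrier N" using bd M2 by auto
      ultimately show "v \<in> {v \<in> lcarrier N. (lzero A, v) \<in> I}" by simp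
    qed
    obtain u v where uv: "p = (u, v)" "u \<in> gen_ideal A ?G1" "v \<in> gen_ideal N ?G2" using p by auto
    have "u \<in> lcarrier A" "(u, lzero N) \<in> I" using gen_ideal_least[OF J1 s1] uv by auto
    moreover have "v \<in> lcarrier N" "(lzero A, v) \<in> I" using gen_ideal_least[OF J2 s2] uv by auto
    ultimately have "ladd D (u, lzero N) (lzero A, v) \<in> I" using Iadd by blast
    then show "p \<in> I" using uv \<open>u \<in> lcarrier A\<close> \<open>v \<in> lcarrier N\<close> by simp
  qed
qed

lemma gamma_dsum: "gammaL D k = gammaL A k \<times> gammaL N k"
proof (induction k)
  case 0 then show ?case by simp
next
  case (Suc k)
  show ?case
  proof (cases k)
    case 0 then show ?thesis by simp
  next
    case (Suc i)
    have "gammaL D (Suc k) = lie_comm D (gammaL A k \<times> gammaL N k) (lcarrier A \<times> lcarrier N)"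
      using Suc.IH Suc by simp
    also have "\<dots> = gammaL A (Suc k) \<times> gammaL N (Suc k)"
      using liecomm_dsum[OF A.gamma_c _ N.gamma_c] A.gamma_ideal N.gamma_ideal Suc
      by (simp add: ideal_def)
    finally show ?thesis .
  qed
qed

lemma gammaN_le: "1 \<le> k \<Longrightarrow> k \<le> Suc n \<Longrightarrow> gammaL N k \<subseteq> zetaL N (Suc n - k)"
proof (induction k)
  case 0 then show ?case by simp
next
  case (Suc k)
  show ?case
  proof (cases k)
    case 0 then show ?thesis using zN by simp
  next
    case (Suc i)
    have IH: "gammaL N k \<subseteq> zetaL N (Suc n - k)" using Suc.IH Suc.prems Suc by simp
    have e: "Suc n - k = Suc (Suc n - Suc k)" using Suc.prems by simp
    have "{lie N m x | m x. m \<in> gammaL N k \<and> x \<in> lcarrier N} \<subseteq> zetaL N (Suc n - Suc k)"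
      using IH e by fastforce
    then show ?thesis using Suc gen_ideal_least[OF N.zeta_ideal] by (simp add: lie_comm_def)
  qed
qed

lemma gammaN: "gammaL N (Suc n) = {lzero N}"
  using gammaN_le[of "Suc n"] N.gamma_ideal[of "Suc n"] by (auto simp: ideal_def)

lemma iterN: "(\<forall>i\<le>k. b i \<in> lcarrier N) \<Longrightarrow> k \<le> n \<Longrightarrow> iter_lie N b k \<in> zetaL N (n - k)"
proof (induction k)
  case 0 then show ?case using zN by simp
next
  case (Suc k)
  have "iter_lie N b k \<in> zetaL N (Suc (n - Suc k))" using Suc by (simp add: Suc_diff_Suc)
  then show ?case using Suc.prems by simp
qed

definition "etan X = coset D (qrep X, lzero N) (zetaL D n)"

lemma ZD: "zetaL D n = zetaL A n \<times> lcarrier N" using zeta_dsum zN by simp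

lemma etan_coset: "a \<in> lcarrier A \<Longrightarrow> etan (coset A a (zetaL A n)) = coset D (a, lzero N) (zetaL D n)"
proof -
  assume a: "a \<in> lcarrier A"
  obtain i where i: "i \<in> zetaL A n" "qrep (coset A a (zetaL A n)) = ladd A a i"
    using A.qrep_coset[OF A.zeta_subsp a] by blast
  have ic: "i \<in> lcarrier A" using i A.zeta_cI by blast
  have z: "(i, lzero N) \<in> zetaL D n" using ZD i by simp
  have w: "(ladd A a i, lzero N) = ladd D (a, lzero N) (i, lzero N)" by simp
  have ex: "\<exists>j\<in>zetaL D n. (ladd A a i, lzero N) = ladd D (a, lzero N) j" using z w by blast
  have "coset D (ladd A a i, lzero N) (zetaL D n) = coset D (a, lzero N) (zetaL D n)"
    apply (rule iffD2[OF D.coset_eq_iff[OF D.zeta_subsp]])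
    using a ic ex by simp_all
  then show ?thesis unfolding etan_def i(2) by simp
qed

lemma etan_iso: "leib_iso etan (quot A (zetaL A n)) (quot D (zetaL D n))"
proof -
  interpret QA: lbq A "zetaL A n" by (unfold_locales) (rule A.zeta_ideal)
  interpret QD: lbq D "zetaL D n" by (unfold_locales) (rule D.zeta_ideal)
  have hom: "leib_hom etan (quot A (zetaL A n)) (quot D (zetaL D n))"
    unfolding leib_hom_def
  proof (intro conjI ballI allI)
    fix x assume "x \<in> lcarrier (quot A (zetaL A n))"
    then show "etan x \<in> lcarrier (quot D (zetaL D n))" by (elim QA.qE) (simp add: etan_coset)
  next
    fix x y assume "x \<in> lcarrier (quot A (zetaL A n))" "y \<in> lcarrier (quot A (zetaL A n))"
    then show "etan (ladd (quot A (zetaL A n)) x y) = ladd (quot D (zetaL D n)) (etan x) (etan y)"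
      by (elim QA.qE) (simp add: etan_coset)
  next
    fix x y assume "x \<in> lcarrier (quot A (zetaL A n))" "y \<in> lcarrier (quot A (zetaL A n))"
    then show "etan (lbr (quot A (zetaL A n)) x y) = lbr (quot D (zetaL D n)) (etan x) (etan y)"
      by (elim QA.qE) (simp add: etan_coset)
  next
    fix c x assume "x \<in> lcarrier (quot A (zetaL A n))"
    then show "etan (lsmult (quot A (zetaL A n)) c x) = lsmult (quot D (zetaL D n)) c (etan x)"
      by (elim QA.qE) (simp add: etan_coset)
  qed
  have inj: "inj_on etan (lcarrier (quot A (zetaL A n)))"
  proof (rule inj_onI)
    fix x y assume x: "x \<in> lcarrier (quot A (zetaL A n))" and y: "y \<in> lcarrier (quot A (zetaL A n))"
      and e: "etan x = etan y"
    obtain a b where ab: "a \<in> lcarrier A" "b \<in> lcarrier A" "x = coset A a (zetaL A n)" "y = coset A b (zetaL A n)"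
      using x y by (elim QA.qE) blast
    have "coset D (a, lzero N) (zetaL D n) = coset D (b, lzero N) (zetaL D n)" using e ab by (simp add: etan_coset)
    then obtain j where j: "j \<in> zetaL D n" "(a, lzero N) = ladd D (b, lzero N) j"
      using D.coset_eq_iff[OF D.zeta_subsp] ab by auto
    obtain j1 j2 where jj: "j = (j1, j2)" "j1 \<in> zetaL A n" using j ZD by auto
    have "a = ladd A b j1" using j jj by simp
    then show "x = y" using ab jj A.coset_eq_iff[OF A.zeta_subsp] A.zeta_cI by auto
  qed
  have img: "etan ` lcarrier (quot A (zetaL A n)) = lcarrier (quot D (zetaL D n))"
  proof
    show "etan ` lcarrier (quot A (zetaL A n)) \<subseteq> lcarrier (quot D (zetaL D n))"
      using hom by (auto simp: leib_hom_def)
    show "lcarrier (quot D (zetaL D n)) \<subseteq> etan ` lcarrier (quot A (zetaL A n))"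
    proof
      fix Y assume "Y \<in> lcarrier (quot D (zetaL D n))"
      then obtain p where p: "p \<in> lcarrier D" "Y = coset D p (zetaL D n)" by (elim QD.qE) blast
      obtain a b where ab: "p = (a, b)" "a \<in> lcarrier A" "b \<in> lcarrier N" using p by auto
      have "(0::nat) = 0" ..
      have "(a, b) = ladd D (a, lzero N) (lzero A, b)" using ab by simp
      moreover have "(lzero A, b) \<in> zetaL D n" using ZD ab by simp
      ultimately have "Y = coset D (a, lzero N) (zetaL D n)"
        using p ab D.coset_eq_iff[OF D.zeta_subsp, of "(a, b)" "(a, lzero N)"] by (simp, blast)
      then show "Y \<in> etan ` lcarrier (quot A (zetaL A n))"
        using etan_coset[OF ab(2)] QA.qc[OF ab(2)] by (metis image_eqI)
    qed
  qed
  show ?thesis using hom inj img by (simp add: leib_iso_def bij_betw_def)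
qed

lemma xin_iso: "leib_iso (\<lambda>a. (a, lzero N)) (subalg A (gammaL A (Suc n))) (subalg D (gammaL D (Suc n)))"
proof -
  have GD: "gammaL D (Suc n) = gammaL A (Suc n) \<times> {lzero N}" using gamma_dsum gammaN by simp
  have gc: "\<And>x. x \<in> gammaL A (Suc n) \<Longrightarrow> x \<in> lcarrier A" using A.gamma_c by blast
  have "leib_hom (\<lambda>a. (a, lzero N)) (subalg A (gammaL A (Suc n))) (subalg D (gammaL D (Suc n)))"
    unfolding leib_hom_def subalg_def using GD gc by auto
  moreover have "bij_betw (\<lambda>a. (a, lzero N)) (gammaL A (Suc n)) (gammaL D (Suc n))"
    unfolding bij_betw_def GD by (auto simp: inj_on_def)
  ultimately show ?thesis by (simp add: leib_iso_def subalg_def)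
qed

lemma n_isoclinism: "lie_isoclinism n A D etan (\<lambda>a. (a, lzero N))"
  unfolding lie_isoclinism_def
proof (intro conjI etan_iso xin_iso allI impI)
  fix x y
  assume xy: "\<forall>i\<le>n. x i \<in> lcarrier A \<and> y i \<in> lcarrier D \<and>
            etan (coset A (x i) (zetaL A n)) = coset D (y i) (zetaL D n)"
  have yc: "\<And>i. i \<le> n \<Longrightarrow> fst (y i) \<in> lcarrier A \<and> snd (y i) \<in> lcarrier N" using xy by auto
  have "coset A (x i) (zetaL A n) = coset A (fst (y i)) (zetaL A n)" if i: "i \<le> n" for i
  proof -
    have xi: "x i \<in> lcarrier A" using xy i by simp
    have "coset D (x i, lzero N) (zetaL D n) = coset D (y i) (zetaL D n)" using xy i etan_coset[OF xi] by simp
    then obtain j where j: "j \<in> zetaL D n" "(x i, lzero N) = ladd D (y i) j"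
      using D.coset_eq_iff[OF D.zeta_subsp] xy i by auto
    obtain j1 j2 where jj: "j = (j1, j2)" "j1 \<in> zetaL A n" using j ZD by auto
    have "x i = ladd A (fst (y i)) j1" using j jj by (cases "y i") simp
    then show ?thesis using A.coset_eq_iff[OF A.zeta_subsp] xy i yc jj by blast
  qed
  then have "iter_lie A x n = iter_lie A (fst \<circ> y) n"
    using gA xy yc unfolding good_def by simp
  moreover have "iter_lie N (snd \<circ> y) n = lzero N"
    using iterN[of n "snd \<circ> y"] yc by simp
  ultimately show "(iter_lie A x n, lzero N) = iter_lie D y n" by (simp add: iter_dsum)
qed

end

lemma n_isoclinic:
  assumes A: "leibniz A" and N: "leibniz N" and zN: "zetaL N n = lcarrier N" and g: "good n A"
  shows "lie_isoclinic n A (dsum A N)"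
proof -
  interpret nctx A N n by (unfold_locales) (rule A, rule N, rule zN, rule g)
  show ?thesis using n_isoclinism by (rule lie_isoclinic_I)
qed


lemma subalg_car[simp]: "lcarrier (subalg L S) = S" by (simp add: subalg_def)
lemma subalg_add[simp]: "ladd (subalg L S) = ladd L" by (simp add: subalg_def)
lemma subalg_zero[simp]: "lzero (subalg L S) = lzero L" by (simp add: subalg_def)
lemma subalg_sm[simp]: "lsmult (subalg L S) = lsmult L" by (simp add: subalg_def)
lemma subalg_br[simp]: "lbr (subalg L S) = lbr L" by (simp add: subalg_def)

lemma isoclinic_trans: "lie_isoclinic n A B \<Longrightarrow> lie_isoclinic n B C \<Longrightarrow> lie_isoclinic n A C"
  unfolding lie_isoclinic_def using iso_trans by blast

lemma isoclinic_sym: "leibniz A \<Longrightarrow> leibniz B \<Longrightarrow> lie_isoclinic n A B \<Longrightarrow> lie_isoclinic n B A"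
  unfolding lie_isoclinic_def using iso_sym unfolding lie_isoclinic_def by blast

lemma isoclinic_good: "leibniz A \<Longrightarrow> lie_isoclinic n A B \<Longrightarrow> good n A"
  unfolding lie_isoclinic_def using iso_good by blast

context lbq begin

lemma qlie: "a \<in> lcarrier L \<Longrightarrow> b \<in> lcarrier L \<Longrightarrow>
  lie (quot L I) (coset L a I) (coset L b I) = coset L (lie L a b) I"
  by (simp add: lie_def)

lemma zeta_quot_all:
  assumes G: "gammaL L (Suc n) \<subseteq> I"
  shows "zetaL (quot L I) n = lcarrier (quot L I)"
proof -
  have claim: "m \<le> n \<Longrightarrow> u \<in> gammaL L (Suc (n - m)) \<Longrightarrow> coset L u I \<in> zetaL (quot L I) m" for m u
  proof (induction m arbitrary: u)
    case 0
    then have uI: "u \<in> I" using G by auto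
    have uc: "u \<in> lcarrier L" using uI S subsp_c by blast
    have "coset L u I = coset L (lzero L) I"
      using coset_eq_iff[OF S uc zero_c] uI uc zero_add[OF uc] by metis
    then show ?case by simp
  next
    case (Suc m)
    have uc: "u \<in> lcarrier L" using Suc.prems gamma_c by blast
    have e: "Suc (n - m) = Suc (Suc (n - Suc m))" using Suc.prems by simp
    have "lie (quot L I) (coset L u I) Y \<in> zetaL (quot L I) m" if Y: "Y \<in> lcarrier (quot L I)" for Y
    proof -
      obtain y where y: "y \<in> lcarrier L" "Y = coset L y I" using Y by (elim qE) blast
      have "lie L u y \<in> gammaL L (Suc (n - m))"
        unfolding e using lie_in_gamma Suc.prems uc y by auto
      then show ?thesis using Suc.IH Suc.prems y uc by (simp add: qlie)
    qed
    then show ?case using uc by simp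
  qed
  show ?thesis
  proof
    show "zetaL (quot L I) n \<subseteq> lcarrier (quot L I)"
      using lb.zeta_c[OF lb.intro[OF quot_leibniz]] .
    show "lcarrier (quot L I) \<subseteq> zetaL (quot L I) n"
    proof
      fix X assume "X \<in> lcarrier (quot L I)"
      then obtain u where u: "u \<in> lcarrier L" "X = coset L u I" by (elim qE) blast
      then show "X \<in> zetaL (quot L I) n" using claim[of n u] by simp
    qed
  qed
qed

end

locale kctx = G1: lb g1 + G2: lb g2 for g1 :: "('k::field, 'a) leib" and g2 :: "('k, 'b) leib" +
  fixes n \<eta> \<xi> assumes iso: "lie_isoclinism n g1 g2 \<eta> \<xi>"
begin

sublocale Q1: lbq g1 "zetaL g1 n" by (unfold_locales) (rule G1.zeta_ideal)
sublocale Q2: lbq g2 "zetaL g2 n" by (unfold_locales) (rule G2.zeta_ideal)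

lemma eiso: "leib_iso \<eta> (quot g1 (zetaL g1 n)) (quot g2 (zetaL g2 n))"
  using iso unfolding lie_isoclinism_def by blast
lemma eh: "leib_hom \<eta> (quot g1 (zetaL g1 n)) (quot g2 (zetaL g2 n))"
  using eiso by (simp add: leib_iso_def)
lemma ebij: "bij_betw \<eta> (lcarrier (quot g1 (zetaL g1 n))) (lcarrier (quot g2 (zetaL g2 n)))"
  using eiso by (simp add: leib_iso_def)

lemma e_ex: "a \<in> lcarrier g1 \<Longrightarrow> \<exists>b\<in>lcarrier g2. \<eta> (coset g1 a (zetaL g1 n)) = coset g2 b (zetaL g2 n)"
proof -
  assume a: "a \<in> lcarrier g1"
  have "\<eta> (coset g1 a (zetaL g1 n)) \<in> lcarrier (quot g2 (zetaL g2 n))"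
    using hom_c[OF eh] a by simp
  then show ?thesis by (elim Q2.qE) blast
qed

lemma e_zero: "\<eta> (coset g1 (lzero g1) (zetaL g1 n)) = coset g2 (lzero g2) (zetaL g2 n)"
proof -
  obtain b where b: "b \<in> lcarrier g2" "\<eta> (coset g1 (lzero g1) (zetaL g1 n)) = coset g2 b (zetaL g2 n)"
    using e_ex by blast
  have h: "\<eta> (lsmult (quot g1 (zetaL g1 n)) 0 (coset g1 (lzero g1) (zetaL g1 n))) =
    lsmult (quot g2 (zetaL g2 n)) 0 (\<eta> (coset g1 (lzero g1) (zetaL g1 n)))"
    by (rule hom_sm[OF eh]) simp
  show ?thesis using h b by simp
qed

definition "Ks = Kset n g1 g2 \<eta>"
abbreviation "K \<equiv> Kalg n g1 g2 \<eta>"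

lemma Ks_iff: "(g, h) \<in> Ks \<longleftrightarrow> g \<in> lcarrier g1 \<and> h \<in> lcarrier g2 \<and> \<eta> (coset g1 g (zetaL g1 n)) = coset g2 h (zetaL g2 n)"
  by (simp add: Ks_def Kset_def)

lemma K_car: "lcarrier K = Ks" by (simp add: Kalg_def Ks_def)
lemma K_add[simp]: "ladd K (a, b) (c, d) = (ladd g1 a c, ladd g2 b d)" by (simp add: Kalg_def)
lemma K_zero[simp]: "lzero K = (lzero g1, lzero g2)" by (simp add: Kalg_def)
lemma K_sm[simp]: "lsmult K c (a, b) = (lsmult g1 c a, lsmult g2 c b)" by (simp add: Kalg_def)
lemma K_br[simp]: "lbr K (a, b) (c, d) = (lbr g1 a c, lbr g2 b d)" by (simp add: Kalg_def)

lemma K_leibniz: "leibniz K"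
  unfolding Kalg_def
proof (rule subalg_leibniz[OF dsum_leibniz[OF G1.lb G2.lb]])
  show "Kset n g1 g2 \<eta> \<subseteq> lcarrier (dsum g1 g2)" by (auto simp: Kset_def)
  show "lzero (dsum g1 g2) \<in> Kset n g1 g2 \<eta>" using e_zero by (simp add: Kset_def)
next
  fix x y assume x: "x \<in> Kset n g1 g2 \<eta>" and y: "y \<in> Kset n g1 g2 \<eta>"
  obtain a b c d where p: "x = (a, b)" "y = (c, d)" by (cases x, cases y)
  have c: "a \<in> lcarrier g1" "b \<in> lcarrier g2" "c \<in> lcarrier g1" "d \<in> lcarrier g2"
    and e: "\<eta> (coset g1 a (zetaL g1 n)) = coset g2 b (zetaL g2 n)" "\<eta> (coset g1 c (zetaL g1 n)) = coset g2 d (zetaL g2 n)"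
    using x y p by (auto simp: Kset_def)
  have h: "\<eta> (ladd (quot g1 (zetaL g1 n)) (coset g1 a (zetaL g1 n)) (coset g1 c (zetaL g1 n))) =
      ladd (quot g2 (zetaL g2 n)) (\<eta> (coset g1 a (zetaL g1 n))) (\<eta> (coset g1 c (zetaL g1 n)))"
    by (rule hom_add[OF eh]) (simp_all add: c)
  have "\<eta> (coset g1 (ladd g1 a c) (zetaL g1 n)) = coset g2 (ladd g2 b d) (zetaL g2 n)" using h c e by simp
  then show "ladd (dsum g1 g2) x y \<in> Kset n g1 g2 \<eta>" using p c by (simp add: Kset_def)
  have h: "\<eta> (lbr (quot g1 (zetaL g1 n)) (coset g1 a (zetaL g1 n)) (coset g1 c (zetaL g1 n))) =
      lbr (quot g2 (zetaL g2 n)) (\<eta> (coset g1 a (zetaL g1 n))) (\<eta> (coset g1 c (zetaL g1 n)))"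
    by (rule hom_br[OF eh]) (simp_all add: c)
  have "\<eta> (coset g1 (lbr g1 a c) (zetaL g1 n)) = coset g2 (lbr g2 b d) (zetaL g2 n)" using h c e by simp
  then show "lbr (dsum g1 g2) x y \<in> Kset n g1 g2 \<eta>" using p c by (simp add: Kset_def)
next
  fix k x assume x: "x \<in> Kset n g1 g2 \<eta>"
  obtain a b where p: "x = (a, b)" by (cases x)
  have c: "a \<in> lcarrier g1" "b \<in> lcarrier g2"
    and e: "\<eta> (coset g1 a (zetaL g1 n)) = coset g2 b (zetaL g2 n)"
    using x p by (auto simp: Kset_def)
  have h: "\<eta> (lsmult (quot g1 (zetaL g1 n)) k (coset g1 a (zetaL g1 n))) =
      lsmult (quot g2 (zetaL g2 n)) k (\<eta> (coset g1 a (zetaL g1 n)))"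
    by (rule hom_sm[OF eh]) (simp add: c)
  have "\<eta> (coset g1 (lsmult g1 k a) (zetaL g1 n)) = coset g2 (lsmult g2 k b) (zetaL g2 n)" using h c e by simp
  then show "lsmult (dsum g1 g2) k x \<in> Kset n g1 g2 \<eta>" using p c by (simp add: Kset_def)
qed

sublocale KL: lb K by (rule lb.intro, rule K_leibniz)

end

context kctx begin

lemma coset_z1: "g \<in> zetaL g1 n \<Longrightarrow> coset g1 g (zetaL g1 n) = coset g1 (lzero g1) (zetaL g1 n)"
  using G1.coset_eq_iff[OF G1.zeta_subsp, of g "lzero g1"] G1.zeta_cI by (metis G1.zero_add G1.zero_c)
lemma coset_z2: "h \<in> zetaL g2 n \<Longrightarrow> coset g2 h (zetaL g2 n) = coset g2 (lzero g2) (zetaL g2 n)"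
  using G2.coset_eq_iff[OF G2.zeta_subsp, of h "lzero g2"] G2.zeta_cI by (metis G2.zero_add G2.zero_c)

lemma Zsnd_ideal: "ideal K (Zsnd n g1 g2)"
  unfolding ideal_def K_car
proof (intro conjI ballI allI)
  show "Zsnd n g1 g2 \<subseteq> Ks"
  proof
    fix x assume "x \<in> Zsnd n g1 g2"
    then obtain h where h: "x = (lzero g1, h)" "h \<in> zetaL g2 n" by (auto simp: Zsnd_def)
    have "\<eta> (coset g1 (lzero g1) (zetaL g1 n)) = coset g2 h (zetaL g2 n)"
      using e_zero coset_z2[OF h(2)] by simp
    then show "x \<in> Ks" using h G2.zeta_cI by (simp add: Ks_iff)
  qed
  show "lzero K \<in> Zsnd n g1 g2" by (simp add: Zsnd_def)
next
  fix x y assume "x \<in> Zsnd n g1 g2" "y \<in> Zsnd n g1 g2"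
  then show "ladd K x y \<in> Zsnd n g1 g2" using G2.zeta_add G2.zeta_cI by (auto simp: Zsnd_def)
next
  fix c x assume "x \<in> Zsnd n g1 g2"
  then show "lsmult K c x \<in> Zsnd n g1 g2" using G2.zeta_sm by (auto simp: Zsnd_def)
next
  fix x y assume x: "x \<in> Zsnd n g1 g2" and y: "y \<in> Ks"
  obtain h a b where xy: "x = (lzero g1, h)" "h \<in> zetaL g2 n" "y = (a, b)" "a \<in> lcarrier g1" "b \<in> lcarrier g2"
    using x y by (cases y) (auto simp: Zsnd_def Ks_iff)
  show "lbr K x y \<in> Zsnd n g1 g2" using xy G2.zeta_br_r by (simp add: Zsnd_def)
  show "lbr K y x \<in> Zsnd n g1 g2" using xy G2.zeta_br_l by (simp add: Zsnd_def)
qed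

lemma Zfst_ideal: "ideal K (Zfst n g1 g2)"
  unfolding ideal_def K_car
proof (intro conjI ballI allI)
  show "Zfst n g1 g2 \<subseteq> Ks"
  proof
    fix x assume "x \<in> Zfst n g1 g2"
    then obtain h where h: "x = (h, lzero g2)" "h \<in> zetaL g1 n" by (auto simp: Zfst_def)
    have "\<eta> (coset g1 h (zetaL g1 n)) = coset g2 (lzero g2) (zetaL g2 n)"
      using e_zero coset_z1[OF h(2)] by simp
    then show "x \<in> Ks" using h G1.zeta_cI by (simp add: Ks_iff)
  qed
  show "lzero K \<in> Zfst n g1 g2" by (simp add: Zfst_def)
next
  fix x y assume "x \<in> Zfst n g1 g2" "y \<in> Zfst n g1 g2"
  then show "ladd K x y \<in> Zfst n g1 g2" using G1.zeta_add G1.zeta_cI by (auto simp: Zfst_def)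
next
  fix c x assume "x \<in> Zfst n g1 g2"
  then show "lsmult K c x \<in> Zfst n g1 g2" using G1.zeta_sm by (auto simp: Zfst_def)
next
  fix x y assume x: "x \<in> Zfst n g1 g2" and y: "y \<in> Ks"
  obtain h a b where xy: "x = (h, lzero g2)" "h \<in> zetaL g1 n" "y = (a, b)" "a \<in> lcarrier g1" "b \<in> lcarrier g2"
    using x y by (cases y) (auto simp: Zfst_def Ks_iff)
  show "lbr K x y \<in> Zfst n g1 g2" using xy G1.zeta_br_r by (simp add: Zfst_def)
  show "lbr K y x \<in> Zfst n g1 g2" using xy G1.zeta_br_l by (simp add: Zfst_def)
qed

sublocale QS: lbq K "Zsnd n g1 g2" by (unfold_locales) (rule Zsnd_ideal)
sublocale QF: lbq K "Zfst n g1 g2" by (unfold_locales) (rule Zfst_ideal)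
sublocale QG: lbq K "gammaL K (Suc n)" by (unfold_locales) (rule KL.gamma_ideal)

definition "f1 X = fst (qrep X)"
definition "f2 X = snd (qrep X)"

lemma f1_coset: "p \<in> Ks \<Longrightarrow> f1 (coset K p (Zsnd n g1 g2)) = fst p"
proof -
  assume p: "p \<in> Ks"
  obtain i where i: "i \<in> Zsnd n g1 g2" "qrep (coset K p (Zsnd n g1 g2)) = ladd K p i"
    using KL.qrep_coset[OF QS.S] p K_car by blast
  obtain h where h: "i = (lzero g1, h)" using i by (auto simp: Zsnd_def)
  show ?thesis unfolding f1_def i(2) h using p by (cases p) (simp add: Ks_iff)
qed

lemma f2_coset: "p \<in> Ks \<Longrightarrow> f2 (coset K p (Zfst n g1 g2)) = snd p"
proof -
  assume p: "p \<in> Ks"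
  obtain i where i: "i \<in> Zfst n g1 g2" "qrep (coset K p (Zfst n g1 g2)) = ladd K p i"
    using KL.qrep_coset[OF QF.S] p K_car by blast
  obtain h where h: "i = (h, lzero g2)" using i by (auto simp: Zfst_def)
  show ?thesis unfolding f2_def i(2) h using p by (cases p) (simp add: Ks_iff)
qed

end


context kctx begin

lemma Kc: "p \<in> lcarrier K \<longleftrightarrow> p \<in> Ks" by (simp add: K_car)

lemma f1_iso: "leib_iso f1 (quot K (Zsnd n g1 g2)) g1"
proof -
  have hom: "leib_hom f1 (quot K (Zsnd n g1 g2)) g1"
    unfolding leib_hom_def
  proof (intro conjI ballI allI)
    fix X assume "X \<in> lcarrier (quot K (Zsnd n g1 g2))"
    then obtain p where p: "p \<in> Ks" "X = coset K p (Zsnd n g1 g2)" by (elim QS.qE) (auto simp: Kc)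
    then show "f1 X \<in> lcarrier g1" using f1_coset by (cases p) (simp add: Ks_iff)
  next
    fix X Y assume "X \<in> lcarrier (quot K (Zsnd n g1 g2))" "Y \<in> lcarrier (quot K (Zsnd n g1 g2))"
    then obtain p q where p: "p \<in> Ks" "X = coset K p (Zsnd n g1 g2)" "q \<in> Ks" "Y = coset K q (Zsnd n g1 g2)"
      by (elim QS.qE) (auto simp: Kc)
    have pq: "ladd K p q \<in> Ks" "lbr K p q \<in> Ks" using p KL.add_c KL.br_c by (auto simp: Kc)
    show "f1 (ladd (quot K (Zsnd n g1 g2)) X Y) = ladd g1 (f1 X) (f1 Y)"
      using p pq f1_coset by (cases p, cases q) (simp add: Kc)
    show "f1 (lbr (quot K (Zsnd n g1 g2)) X Y) = lbr g1 (f1 X) (f1 Y)"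
      using p pq f1_coset by (cases p, cases q) (simp add: Kc)
  next
    fix c X assume "X \<in> lcarrier (quot K (Zsnd n g1 g2))"
    then obtain p where p: "p \<in> Ks" "X = coset K p (Zsnd n g1 g2)" by (elim QS.qE) (auto simp: Kc)
    have pq: "lsmult K c p \<in> Ks" using p KL.sm_c by (auto simp: Kc)
    show "f1 (lsmult (quot K (Zsnd n g1 g2)) c X) = lsmult g1 c (f1 X)"
      using p pq f1_coset by (cases p) (simp add: Kc)
  qed
  have inj: "inj_on f1 (lcarrier (quot K (Zsnd n g1 g2)))"
  proof (rule inj_onI)
    fix X Y assume X: "X \<in> lcarrier (quot K (Zsnd n g1 g2))" and Y: "Y \<in> lcarrier (quot K (Zsnd n g1 g2))"
      and e: "f1 X = f1 Y"
    obtain p q where p: "p \<in> Ks" "X = coset K p (Zsnd n g1 g2)" "q \<in> Ks" "Y = coset K q (Zsnd n g1 g2)"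
      using X Y by (elim QS.qE) (auto simp: Kc)
    obtain a b c d where ab: "p = (a, b)" "q = (c, d)" by (cases p, cases q)
    have ac: "a = c" using e p ab f1_coset by simp
    have c: "a \<in> lcarrier g1" "b \<in> lcarrier g2" "d \<in> lcarrier g2"
      and e1: "\<eta> (coset g1 a (zetaL g1 n)) = coset g2 b (zetaL g2 n)"
      and e2: "\<eta> (coset g1 a (zetaL g1 n)) = coset g2 d (zetaL g2 n)"
      using p ab ac by (auto simp: Ks_iff)
    have "coset g2 b (zetaL g2 n) = coset g2 d (zetaL g2 n)" using e1 e2 by simp
    then obtain j where j: "j \<in> zetaL g2 n" "b = ladd g2 d j"
      using G2.coset_eq_iff[OF G2.zeta_subsp c(2) c(3)] by blast
    have jc: "j \<in> lcarrier g2" using j G2.zeta_cI by blast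
    have "p = ladd K q (lzero g1, j)" using ab ac j c by simp
    moreover have "(lzero g1, j) \<in> Zsnd n g1 g2" using j by (simp add: Zsnd_def)
    ultimately show "X = Y" using p KL.coset_eq_iff[OF QS.S] by (auto simp: Kc)
  qed
  have img: "f1 ` lcarrier (quot K (Zsnd n g1 g2)) = lcarrier g1"
  proof
    show "f1 ` lcarrier (quot K (Zsnd n g1 g2)) \<subseteq> lcarrier g1"
      using hom by (auto simp: leib_hom_def)
    show "lcarrier g1 \<subseteq> f1 ` lcarrier (quot K (Zsnd n g1 g2))"
    proof
      fix a assume a: "a \<in> lcarrier g1"
      obtain b where b: "b \<in> lcarrier g2" "\<eta> (coset g1 a (zetaL g1 n)) = coset g2 b (zetaL g2 n)"
        using e_ex a by blast
      have p: "(a, b) \<in> Ks" using a b by (simp add: Ks_iff)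
      then have "coset K (a, b) (Zsnd n g1 g2) \<in> lcarrier (quot K (Zsnd n g1 g2))" by (simp add: Kc)
      moreover have "f1 (coset K (a, b) (Zsnd n g1 g2)) = a" using f1_coset p by simp
      ultimately show "a \<in> f1 ` lcarrier (quot K (Zsnd n g1 g2))" by (metis image_eqI)
    qed
  qed
  show ?thesis using hom inj img by (simp add: leib_iso_def bij_betw_def)
qed

lemma f2_iso: "leib_iso f2 (quot K (Zfst n g1 g2)) g2"
proof -
  have hom: "leib_hom f2 (quot K (Zfst n g1 g2)) g2"
    unfolding leib_hom_def
  proof (intro conjI ballI allI)
    fix X assume "X \<in> lcarrier (quot K (Zfst n g1 g2))"
    then obtain p where p: "p \<in> Ks" "X = coset K p (Zfst n g1 g2)" by (elim QF.qE) (auto simp: Kc)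
    then show "f2 X \<in> lcarrier g2" using f2_coset by (cases p) (simp add: Ks_iff)
  next
    fix X Y assume "X \<in> lcarrier (quot K (Zfst n g1 g2))" "Y \<in> lcarrier (quot K (Zfst n g1 g2))"
    then obtain p q where p: "p \<in> Ks" "X = coset K p (Zfst n g1 g2)" "q \<in> Ks" "Y = coset K q (Zfst n g1 g2)"
      by (elim QF.qE) (auto simp: Kc)
    have pq: "ladd K p q \<in> Ks" "lbr K p q \<in> Ks" using p KL.add_c KL.br_c by (auto simp: Kc)
    show "f2 (ladd (quot K (Zfst n g1 g2)) X Y) = ladd g2 (f2 X) (f2 Y)"
      using p pq f2_coset by (cases p, cases q) (simp add: Kc)
    show "f2 (lbr (quot K (Zfst n g1 g2)) X Y) = lbr g2 (f2 X) (f2 Y)"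
      using p pq f2_coset by (cases p, cases q) (simp add: Kc)
  next
    fix c X assume "X \<in> lcarrier (quot K (Zfst n g1 g2))"
    then obtain p where p: "p \<in> Ks" "X = coset K p (Zfst n g1 g2)" by (elim QF.qE) (auto simp: Kc)
    have pq: "lsmult K c p \<in> Ks" using p KL.sm_c by (auto simp: Kc)
    show "f2 (lsmult (quot K (Zfst n g1 g2)) c X) = lsmult g2 c (f2 X)"
      using p pq f2_coset by (cases p) (simp add: Kc)
  qed
  have inj: "inj_on f2 (lcarrier (quot K (Zfst n g1 g2)))"
  proof (rule inj_onI)
    fix X Y assume X: "X \<in> lcarrier (quot K (Zfst n g1 g2))" and Y: "Y \<in> lcarrier (quot K (Zfst n g1 g2))"
      and e: "f2 X = f2 Y"
    obtain p q where p: "p \<in> Ks" "X = coset K p (Zfst n g1 g2)" "q \<in> Ks" "Y = coset K q (Zfst n g1 g2)"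
      using X Y by (elim QF.qE) (auto simp: Kc)
    obtain a b c d where ab: "p = (a, b)" "q = (c, d)" by (cases p, cases q)
    have bd: "b = d" using e p ab f2_coset by simp
    have c: "a \<in> lcarrier g1" "b \<in> lcarrier g2" "c \<in> lcarrier g1"
      and e1: "\<eta> (coset g1 a (zetaL g1 n)) = coset g2 b (zetaL g2 n)"
      and e2: "\<eta> (coset g1 c (zetaL g1 n)) = coset g2 b (zetaL g2 n)"
      using p ab bd by (auto simp: Ks_iff)
    have "coset g1 a (zetaL g1 n) = coset g1 c (zetaL g1 n)"
      using ebij e1 e2 c unfolding bij_betw_def by (metis inj_onD Q1.qc)
    then obtain j where j: "j \<in> zetaL g1 n" "a = ladd g1 c j"
      using G1.coset_eq_iff[OF G1.zeta_subsp c(1) c(3)] by auto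
    have jc: "j \<in> lcarrier g1" using j G1.zeta_cI by blast
    have "p = ladd K q (j, lzero g2)" using ab bd j c by simp
    moreover have "(j, lzero g2) \<in> Zfst n g1 g2" using j by (simp add: Zfst_def)
    ultimately show "X = Y" using p KL.coset_eq_iff[OF QF.S] by (auto simp: Kc)
  qed
  have img: "f2 ` lcarrier (quot K (Zfst n g1 g2)) = lcarrier g2"
  proof
    show "f2 ` lcarrier (quot K (Zfst n g1 g2)) \<subseteq> lcarrier g2"
      using hom by (auto simp: leib_hom_def)
    show "lcarrier g2 \<subseteq> f2 ` lcarrier (quot K (Zfst n g1 g2))"
    proof
      fix b assume b: "b \<in> lcarrier g2"
      have "coset g2 b (zetaL g2 n) \<in> \<eta> ` lcarrier (quot g1 (zetaL g1 n))"
        using ebij b Q2.qc unfolding bij_betw_def by blast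
      then obtain a where a: "a \<in> lcarrier g1" "\<eta> (coset g1 a (zetaL g1 n)) = coset g2 b (zetaL g2 n)"
        by (auto simp: Q1.qcar)
      have p: "(a, b) \<in> Ks" using a b by (simp add: Ks_iff)
      then have "coset K (a, b) (Zfst n g1 g2) \<in> lcarrier (quot K (Zfst n g1 g2))" by (simp add: Kc)
      moreover have "f2 (coset K (a, b) (Zfst n g1 g2)) = b" using f2_coset p by simp
      ultimately show "b \<in> f2 ` lcarrier (quot K (Zfst n g1 g2))" by (metis image_eqI)
    qed
  qed
  show ?thesis using hom inj img by (simp add: leib_iso_def bij_betw_def)
qed

end


context kctx begin

lemma final:
  shows "lie_isoclinic n
           (quot K (Zsnd n g1 g2))
           (dsum (quot K (Zfst n g1 g2)) (quot K (gammaL K (Suc n))))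
       \<and> lie_isoclinic n
           (quot K (Zfst n g1 g2))
           (dsum (quot K (Zsnd n g1 g2)) (quot K (gammaL K (Suc n))))"
proof -
  have LQ2: "leibniz (quot K (Zsnd n g1 g2))" by (rule QS.quot_leibniz)
  have LQ1: "leibniz (quot K (Zfst n g1 g2))" by (rule QF.quot_leibniz)
  have LN: "leibniz (quot K (gammaL K (Suc n)))" by (rule QG.quot_leibniz)
  have hyp: "lie_isoclinic n g1 g2" by (rule lie_isoclinic_I[OF iso])
  have hyp': "lie_isoclinic n g2 g1" by (rule isoclinic_sym[OF G1.lb G2.lb hyp])
  have good1: "good n g1" by (rule iso_good[OF G1.lb iso])
  have good2: "good n g2" by (rule isoclinic_good[OF G2.lb hyp'])
  have a: "lie_isoclinic n (quot K (Zsnd n g1 g2)) g1" by (rule iso_isoclinic[OF LQ2 G1.lb f1_iso good1])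
  have b: "lie_isoclinic n (quot K (Zfst n g1 g2)) g2" by (rule iso_isoclinic[OF LQ1 G2.lb f2_iso good2])
  have a': "lie_isoclinic n g1 (quot K (Zsnd n g1 g2))" by (rule isoclinic_sym[OF LQ2 G1.lb a])
  have b': "lie_isoclinic n g2 (quot K (Zfst n g1 g2))" by (rule isoclinic_sym[OF LQ1 G2.lb b])
  have zN: "zetaL (quot K (gammaL K (Suc n))) n = lcarrier (quot K (gammaL K (Suc n)))"
    by (rule QG.zeta_quot_all) simp
  have gQ1: "good n (quot K (Zfst n g1 g2))" by (rule isoclinic_good[OF LQ1 b])
  have gQ2: "good n (quot K (Zsnd n g1 g2))" by (rule isoclinic_good[OF LQ2 a])
  have c1: "lie_isoclinic n (quot K (Zfst n g1 g2)) (dsum (quot K (Zfst n g1 g2)) (quot K (gammaL K (Suc n))))"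
    by (rule n_isoclinic[OF LQ1 LN zN gQ1])
  have c2: "lie_isoclinic n (quot K (Zsnd n g1 g2)) (dsum (quot K (Zsnd n g1 g2)) (quot K (gammaL K (Suc n))))"
    by (rule n_isoclinic[OF LQ2 LN zN gQ2])
  show ?thesis
    using isoclinic_trans[OF a isoclinic_trans[OF hyp isoclinic_trans[OF b' c1]]]
          isoclinic_trans[OF b isoclinic_trans[OF hyp' isoclinic_trans[OF a' c2]]]
    by blast
qed

end

theorem mainTheorem8:
  fixes g1 :: "('k::field, 'a) leib" and g2 :: "('k, 'b) leib"
    and n :: nat and \<eta> :: "'a set \<Rightarrow> 'b set" and \<xi> :: "'a \<Rightarrow> 'b"
  assumes half: "(2::'k) \<noteq> 0"
    and L1: "leibniz g1" and L2: "leibniz g2"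
    and n1: "n \<ge> 1"
    and iso: "lie_isoclinism n g1 g2 \<eta> \<xi>"
    and c1: "lie_comm g1 (zetaL g1 (n - 1)) (lcarrier g1) \<subseteq> gammaL g1 (Suc n)"
    and c2: "lie_comm g2 (zetaL g2 (n - 1)) (lcarrier g2) \<subseteq> gammaL g2 (Suc n)"
  shows "lie_isoclinic n
           (quot (Kalg n g1 g2 \<eta>) (Zsnd n g1 g2))
           (dsum (quot (Kalg n g1 g2 \<eta>) (Zfst n g1 g2))
                 (quot (Kalg n g1 g2 \<eta>) (gammaL (Kalg n g1 g2 \<eta>) (Suc n))))
       \<and> lie_isoclinic n
           (quot (Kalg n g1 g2 \<eta>) (Zfst n g1 g2))
           (dsum (quot (Kalg n g1 g2 \<eta>) (Zsnd n g1 g2))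
                 (quot (Kalg n g1 g2 \<eta>) (gammaL (Kalg n g1 g2 \<eta>) (Suc n))))"
proof -
  interpret kctx g1 g2 n \<eta> \<xi>
    by (unfold_locales) (rule L1, rule L2, rule iso)
  show ?thesis by (rule final)
qed


end
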